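(* For every $\epsilon>0$ there exist $m_0(\epsilon)$ and $p_0(\epsilon)$ such that for every prime $p>p_0(\epsilon)$ and every $f:\mathbb{Z}_p\to[0,1]$ there exist an integer $1\le m<m_0(\epsilon)$, integers $c_1,\dots,c_m$ that are pairwise distinct modulo $p$ and satisfy $|c_i|<p^{1-1/m}$, and a function $g:\mathbb{R}\to\mathbb{R}$ of the form $$g(\alpha)=p^{-1}\sum_{i=1}^m e^{-2\pi i c_i\alpha/p}\,\gamma_i\qquad(\alpha\in\mathbb{R})$$ for some complex numbers $\gamma_i$, such that (writing $\tilde g$ for the restriction of $g$ to $\{0,\dots,p-1\}$, viewed as a function on $\mathbb{Z}_p$; note $g$ is $p$-periodic and $\hat{\tilde g}(c_i)=\gamma_i$): (i) $\mathbb{E}(\tilde g)=\mathbb{E}(f)$; (ii) $g(\alpha)\in[-2\epsilon,1+2\epsilon]$ for all $\alpha\in\mathbb{R}$; (iii) $|\Lambda_3(\tilde g)-\Lambda_3(f)|<25\epsilon$.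
   Context: For $f:\mathbb{Z}_p\to\mathbb{C}$: $\hat f(a)=\sum_{n\in\mathbb{Z}_p} f(n)e^{2\pi i a n/p}$, $\mathbb{E}(f)=\frac1p\sum_{n\in\mathbb{Z}_p}f(n)$, and $\Lambda_3(f)=\frac{1}{p^2}\sum_{n,d\in\mathbb{Z}_p} f(n)f(n+d)f(n+2d)$. *)

theory Defs
  imports Complex_Main "HOL-Computational_Algebra.Primes"
begin

text \<open>Functions on Z_p are represented as functions on nat, only their values on
  {0..<p} matter; residues are taken with mod p.\<close>

definition zp_mean :: "nat \<Rightarrow> (nat \<Rightarrow> real) \<Rightarrow> real" where
  "zp_mean p f = (1 / real p) * (\<Sum>n<p. f n)"

definition zp_Lambda3 :: "nat \<Rightarrow> (nat \<Rightarrow> real) \<Rightarrow> real" where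
  "zp_Lambda3 p f = (1 / (real p)^2) *
     (\<Sum>n<p. \<Sum>d<p. f n * f ((n + d) mod p) * f ((n + 2 * d) mod p))"

end

theory Submission
  imports Defs "HOL-Number_Theory.Number_Theory" "HOL-Library.FuncSet" "HOL-Library.Real_Mod"
begin

definition ee :: "nat \<Rightarrow> real \<Rightarrow> complex" where
  "ee p \<theta> = cis (2 * pi * \<theta> / real p)"

lemma ee_add: "ee p (a + b) = ee p a * ee p b"
  by (simp add: ee_def cis_mult add_divide_distrib algebra_simps)

lemma ee_0[simp]: "ee p 0 = 1"
  by (simp add: ee_def)

lemma ee_neg: "ee p (- a) = cnj (ee p a)"
  by (simp add: ee_def cis_cnj)

lemma norm_ee[simp]: "norm (ee p a) = 1"
  by (simp add: ee_def)

lemma ee_mult_cnj: "ee p a * cnj (ee p a) = 1"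
  by (metis complex_norm_square norm_ee of_real_1 power_one)

lemma ee_pow: "ee p a ^ n = ee p (real n * a)"
  by (simp add: ee_def DeMoivre algebra_simps)

lemma ee_int_p: "p > 0 \<Longrightarrow> ee p (of_int (k * int p)) = 1"
proof -
  assume "p > 0"
  have "2 * pi * real_of_int (k * int p) / real p = 2 * pi * of_int k"
    using \<open>p > 0\<close> by (simp add: field_simps)
  then show ?thesis by (simp add: ee_def)
qed

lemma ee_cong:
  assumes "p > 0" "[a = b] (mod int p)"
  shows "ee p (of_int a) = ee p (of_int b)"
proof -
  obtain k where "a = b + k * int p"
    using assms(2) by (metis cong_iff_lin cong_sym mult.commute)
  then have "ee p (of_int a) = ee p (of_int b) * ee p (of_int (k * int p))"
    by (simp add: ee_add[symmetric])
  then show ?thesis using ee_int_p[OF assms(1)] by simp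
qed

lemma ee_eq_1_iff:
  assumes "p > 0"
  shows "ee p (of_int a) = 1 \<longleftrightarrow> int p dvd a"
proof
  assume "ee p (of_int a) = 1"
  then obtain n where n: "2 * pi * of_int a / real p = of_int n * (2 * pi)"
    by (auto simp: ee_def cis_eq_1_iff)
  then have "real_of_int a = of_int n * real p"
    using assms by (simp add: field_simps)
  then have "a = n * int p" by (metis of_int_eq_iff of_int_mult of_int_of_nat_eq)
  then show "int p dvd a" by simp
next
  assume "int p dvd a"
  then obtain k where "a = k * int p" by (metis dvd_def mult.commute)
  then show "ee p (of_int a) = 1" using ee_int_p[OF assms] by simp
qed

lemma orth:
  assumes "p > 0"
  shows "(\<Sum>x<p. ee p (of_int (\<nu> * int x))) = (if int p dvd \<nu> then of_nat p else 0)"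
proof -
  define z where "z = ee p (of_int \<nu>)"
  have zx: "ee p (of_int (\<nu> * int x)) = z ^ x" for x
    by (simp add: z_def ee_pow mult.commute)
  show ?thesis
  proof (cases "int p dvd \<nu>")
    case True
    then have "z = 1" using ee_eq_1_iff[OF assms] z_def by simp
    then show ?thesis using True unfolding zx by simp
  next
    case False
    then have "z \<noteq> 1" using ee_eq_1_iff[OF assms] z_def by simp
    moreover have "z ^ p = 1"
      using ee_int_p[OF assms, of \<nu>] by (simp add: z_def ee_pow mult.commute)
    ultimately show ?thesis using False unfolding zx by (simp add: geometric_sum)
  qed
qed

lemma ee_mul_int: "ee p (of_int u) * ee p (of_int v) = ee p (of_int (u + v))"
  by (simp add: ee_add[symmetric])

lemma bij_modp:
  fixes p :: nat and f :: "nat \<Rightarrow> nat"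
  assumes "p > 0" "\<And>x y. x < p \<Longrightarrow> y < p \<Longrightarrow> [f x = f y] (mod p) \<Longrightarrow> x = y"
  shows "bij_betw (\<lambda>x. f x mod p) {..<p} {..<p}"
proof -
  have inj: "inj_on (\<lambda>x. f x mod p) {..<p}"
  proof (rule inj_onI)
    fix x y assume "x \<in> {..<p}" "y \<in> {..<p}" "f x mod p = f y mod p"
    then show "x = y" using assms(2)[of x y] by (simp add: cong_def)
  qed
  have "(\<lambda>x. f x mod p) ` {..<p} \<subseteq> {..<p}" using assms(1) by auto
  then have "(\<lambda>x. f x mod p) ` {..<p} = {..<p}" using endo_inj_surj[OF _ _ inj] by auto
  then show ?thesis using inj by (simp add: bij_betw_def)
qed

lemma mod2_diff: "(2 * (x mod m) - b) mod m = (2 * x - b) mod (m::int)"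
proof -
  have "(2 * (x mod m) - b) mod m = ((2 * (x mod m)) mod m - b) mod m" by (rule mod_diff_left_eq[symmetric])
  also have "\<dots> = ((2 * x) mod m - b) mod m" by (simp only: mod_mult_right_eq)
  also have "\<dots> = (2 * x - b) mod m" by (rule mod_diff_left_eq)
  finally show ?thesis .
qed

definition FC :: "nat \<Rightarrow> (nat \<Rightarrow> real) \<Rightarrow> int \<Rightarrow> complex" where
  "FC p \<phi> a = (1 / of_nat p) * (\<Sum>x<p. of_real (\<phi> x) * ee p (of_int (a * int x)))"

lemma FC_cong:
  assumes "p > 0" "[a = b] (mod int p)"
  shows "FC p \<phi> a = FC p \<phi> b"
proof -
  have "ee p (of_int (a * int x)) = ee p (of_int (b * int x))" for x
    by (rule ee_cong[OF assms(1)]) (use assms(2) in \<open>simp add: cong_mult\<close>)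
  then show ?thesis unfolding FC_def by simp
qed

lemma Lambda3_alt:
  assumes "p > 0"
  shows "zp_Lambda3 p \<phi> = (1 / (real p)^2) *
     (\<Sum>x<p. \<Sum>z<p. \<phi> x * \<phi> z * \<phi> (nat ((2 * int z - int x) mod int p)))"
proof -
  have inner: "(\<Sum>d<p. \<phi> n * \<phi> ((n + d) mod p) * \<phi> ((n + 2 * d) mod p)) =
      (\<Sum>z<p. \<phi> n * \<phi> z * \<phi> (nat ((2 * int z - int n) mod int p)))" for n
  proof -
    have bij: "bij_betw (\<lambda>d. (n + d) mod p) {..<p} {..<p}"
      by (rule bij_modp[OF assms]) (simp add: cong_add_lcancel_nat cong_less_modulus_unique_nat)
    have eq: "\<phi> ((n + 2 * d) mod p) = \<phi> (nat ((2 * int ((n + d) mod p) - int n) mod int p))" for d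
    proof -
      have "int ((n + d) mod p) = (int n + int d) mod int p" by (simp add: of_nat_mod)
      then have "(2 * int ((n + d) mod p) - int n) mod int p = (2 * (int n + int d) - int n) mod int p"
        using mod2_diff[of "int n + int d" "int p" "int n"] by simp
      also have "\<dots> = (int n + 2 * int d) mod int p" by (simp add: algebra_simps)
      also have "\<dots> = int ((n + 2 * d) mod p)" by (simp add: of_nat_mod)
      finally show ?thesis by simp
    qed
    have "(\<Sum>z<p. \<phi> n * \<phi> z * \<phi> (nat ((2 * int z - int n) mod int p))) =
       (\<Sum>d<p. \<phi> n * \<phi> ((n + d) mod p) * \<phi> (nat ((2 * int ((n + d) mod p) - int n) mod int p)))"
      by (rule sum.reindex_bij_betw[OF bij, symmetric])
    then show ?thesis by (simp only: eq)
  qed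
  show ?thesis unfolding zp_Lambda3_def using inner by simp
qed

lemma dvd_iff_eq_mod:
  assumes "p > 0" "y < p"
  shows "int p dvd (int x + int y - 2 * int z) \<longleftrightarrow> y = nat ((2 * int z - int x) mod int p)"
proof -
  have "int p dvd (int x + int y - 2 * int z) \<longleftrightarrow> [int y = 2 * int z - int x] (mod int p)"
    by (simp add: cong_iff_dvd_diff algebra_simps)
  also have "\<dots> \<longleftrightarrow> int y = (2 * int z - int x) mod int p"
    using assms by (simp add: cong_def)
  also have "\<dots> \<longleftrightarrow> y = nat ((2 * int z - int x) mod int p)"
    using assms by auto
  finally show ?thesis .
qed

lemma Lambda3_fourier:
  assumes "p > 0"
  shows "complex_of_real (zp_Lambda3 p \<phi>) = (\<Sum>a<p. FC p \<phi> (int a) ^ 2 * FC p \<phi> (- 2 * int a))"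
proof -
  define F where "F x = complex_of_real (\<phi> x)" for x
  define t where "t x y z a = F x * F y * F z * ee p (of_int ((int x + int y - 2 * int z) * int a))" for x y z a
  have step1: "FC p \<phi> (int a) ^ 2 * FC p \<phi> (- 2 * int a) =
     (1 / of_nat p ^ 3) * (\<Sum>x<p. \<Sum>y<p. \<Sum>z<p. t x y z a)" for a
  proof -
    have "FC p \<phi> (int a) ^ 2 * FC p \<phi> (- 2 * int a) =
      (1 / of_nat p ^ 3) * ((\<Sum>x<p. F x * ee p (of_int (int a * int x))) *
        (\<Sum>y<p. F y * ee p (of_int (int a * int y))) * (\<Sum>z<p. F z * ee p (of_int (- 2 * int a * int z))))"
      unfolding FC_def F_def by (simp add: power2_eq_square power3_eq_cube)
    also have "(\<Sum>x<p. F x * ee p (of_int (int a * int x))) *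
        (\<Sum>y<p. F y * ee p (of_int (int a * int y))) * (\<Sum>z<p. F z * ee p (of_int (- 2 * int a * int z)))
       = (\<Sum>x<p. \<Sum>y<p. \<Sum>z<p. (F x * ee p (of_int (int a * int x))) * (F y * ee p (of_int (int a * int y)))
            * (F z * ee p (of_int (- 2 * int a * int z))))" (is "sum ?A _ * sum ?B _ * sum ?C _ = _")
    proof -
      have "sum ?A {..<p} * sum ?B {..<p} * sum ?C {..<p} = (\<Sum>x<p. \<Sum>y<p. ?A x * ?B y) * sum ?C {..<p}"
        by (simp only: sum_product[of ?A "{..<p}" ?B "{..<p}"])
      also have "\<dots> = (\<Sum>x<p. \<Sum>y<p. ?A x * ?B y * sum ?C {..<p})"
        by (simp only: sum_distrib_right)
      also have "\<dots> = (\<Sum>x<p. \<Sum>y<p. \<Sum>z<p. ?A x * ?B y * ?C z)"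
        by (simp only: sum_distrib_left)
      finally show ?thesis .
    qed
    also have "\<dots> = (\<Sum>x<p. \<Sum>y<p. \<Sum>z<p. t x y z a)"
    proof (intro sum.cong refl)
      fix x y z
      have "ee p (of_int (int a * int x)) * ee p (of_int (int a * int y)) * ee p (of_int (- 2 * int a * int z))
          = ee p (of_int ((int x + int y - 2 * int z) * int a))"
      proof -
        have "ee p (of_int (int a * int x)) * ee p (of_int (int a * int y)) * ee p (of_int (- 2 * int a * int z))
          = ee p (of_int (int a * int x + int a * int y + - 2 * int a * int z))"
          by (simp only: ee_mul_int)
        also have "\<dots> = ee p (of_int ((int x + int y - 2 * int z) * int a))"
          by (rule arg_cong[where f="\<lambda>u. ee p (of_int u)"]) (simp add: algebra_simps)
        finally show ?thesis .
      qed
      then show "(F x * ee p (of_int (int a * int x))) * (F y * ee p (of_int (int a * int y)))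
            * (F z * ee p (of_int (- 2 * int a * int z))) = t x y z a"
        unfolding t_def by (simp add: algebra_simps)
    qed
    finally show ?thesis .
  qed
  have "(\<Sum>a<p. FC p \<phi> (int a) ^ 2 * FC p \<phi> (- 2 * int a)) =
     (1 / of_nat p ^ 3) * (\<Sum>a<p. \<Sum>x<p. \<Sum>y<p. \<Sum>z<p. t x y z a)"
    unfolding step1 by (rule sum_distrib_left[symmetric])
  also have "(\<Sum>a<p. \<Sum>x<p. \<Sum>y<p. \<Sum>z<p. t x y z a) = (\<Sum>x<p. \<Sum>y<p. \<Sum>z<p. \<Sum>a<p. t x y z a)"
  proof -
    have "(\<Sum>a<p. \<Sum>x<p. \<Sum>y<p. \<Sum>z<p. t x y z a) = (\<Sum>x<p. \<Sum>a<p. \<Sum>y<p. \<Sum>z<p. t x y z a)"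
      by (rule sum.swap)
    also have "\<dots> = (\<Sum>x<p. \<Sum>y<p. \<Sum>a<p. \<Sum>z<p. t x y z a)"
      by (rule sum.cong[OF refl], rule sum.swap)
    also have "\<dots> = (\<Sum>x<p. \<Sum>y<p. \<Sum>z<p. \<Sum>a<p. t x y z a)"
      by (rule sum.cong[OF refl], rule sum.cong[OF refl], rule sum.swap)
    finally show ?thesis .
  qed
  also have "(\<Sum>x<p. \<Sum>y<p. \<Sum>z<p. \<Sum>a<p. t x y z a) =
      (\<Sum>x<p. \<Sum>z<p. of_nat p * (F x * F z * F (nat ((2 * int z - int x) mod int p))))"
  proof -
    have "(\<Sum>a<p. t x y z a) = F x * F y * F z *
        (if int p dvd (int x + int y - 2 * int z) then of_nat p else 0)" for x y z
      unfolding t_def using orth[OF assms, of "int x + int y - 2 * int z"]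
      by (simp add: sum_distrib_left[symmetric])
    then have "(\<Sum>x<p. \<Sum>y<p. \<Sum>z<p. \<Sum>a<p. t x y z a) =
        (\<Sum>x<p. \<Sum>z<p. \<Sum>y<p. F x * F y * F z *
        (if int p dvd (int x + int y - 2 * int z) then of_nat p else 0))"
    proof -
      have "(\<Sum>x<p. \<Sum>y<p. \<Sum>z<p. \<Sum>a<p. t x y z a) = (\<Sum>x<p. \<Sum>y<p. \<Sum>z<p. F x * F y * F z *
        (if int p dvd (int x + int y - 2 * int z) then of_nat p else 0))"
        by (simp only: \<open>\<And>x y z. (\<Sum>a<p. t x y z a) = _\<close>)
      also have "\<dots> = (\<Sum>x<p. \<Sum>z<p. \<Sum>y<p. F x * F y * F z *
        (if int p dvd (int x + int y - 2 * int z) then of_nat p else 0))"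
        by (rule sum.cong[OF refl], rule sum.swap)
      finally show ?thesis .
    qed
    also have "\<dots> = (\<Sum>x<p. \<Sum>z<p. \<Sum>y<p. if y = nat ((2 * int z - int x) mod int p) then
         of_nat p * (F x * F z * F y) else 0)"
    proof (intro sum.cong refl)
      fix x z y assume "y \<in> {..<p}"
      then have iff: "int p dvd (int x + int y - 2 * int z) \<longleftrightarrow> y = nat ((2 * int z - int x) mod int p)"
        by (intro dvd_iff_eq_mod[OF assms]) auto
      show "F x * F y * F z * (if int p dvd (int x + int y - 2 * int z) then of_nat p else 0) =
         (if y = nat ((2 * int z - int x) mod int p) then of_nat p * (F x * F z * F y) else 0)"
        unfolding iff by (simp add: mult_ac)
    qed
    also have "\<dots> = (\<Sum>x<p. \<Sum>z<p. of_nat p * (F x * F z * F (nat ((2 * int z - int x) mod int p))))"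
    proof (intro sum.cong refl)
      fix x z
      have "nat ((2 * int z - int x) mod int p) \<in> {..<p}" using assms
        by (simp add: nat_less_iff)
      then show "(\<Sum>y<p. if y = nat ((2 * int z - int x) mod int p) then of_nat p * (F x * F z * F y) else 0)
        = of_nat p * (F x * F z * F (nat ((2 * int z - int x) mod int p)))"
        by (simp add: sum.delta)
    qed
    finally show ?thesis .
  qed
  also have "(\<Sum>x<p. \<Sum>z<p. of_nat p * (F x * F z * F (nat ((2 * int z - int x) mod int p)))) =
     of_nat p * (\<Sum>x<p. \<Sum>z<p. F x * F z * F (nat ((2 * int z - int x) mod int p)))"
    by (simp only: sum_distrib_left)
  finally have "(\<Sum>a<p. FC p \<phi> (int a) ^ 2 * FC p \<phi> (- 2 * int a)) =
      (1 / of_nat p ^ 3) * (of_nat p * (\<Sum>x<p. \<Sum>z<p. F x * F z * F (nat ((2 * int z - int x) mod int p))))" .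
  also have "\<dots> = (1 / of_nat p ^ 2) * (\<Sum>x<p. \<Sum>z<p. F x * F z * F (nat ((2 * int z - int x) mod int p)))"
    using assms by (simp add: power2_eq_square power3_eq_cube)
  finally have "(\<Sum>a<p. FC p \<phi> (int a) ^ 2 * FC p \<phi> (- 2 * int a)) =
      (1 / of_nat p ^ 2) * (\<Sum>x<p. \<Sum>z<p. F x * F z * F (nat ((2 * int z - int x) mod int p)))" .
  then show ?thesis unfolding Lambda3_alt[OF assms] F_def by simp
qed


lemma cnj_FC: "cnj (FC p \<phi> a) = (1 / of_nat p) * (\<Sum>y<p. of_real (\<phi> y) * ee p (of_int (- a * int y)))"
  by (simp add: FC_def ee_neg[symmetric])

lemma Parseval_c:
  assumes "p > 0"
  shows "(\<Sum>a<p. FC p \<phi> (int a) * cnj (FC p \<phi> (int a))) = (1 / of_nat p) * (\<Sum>x<p. of_real ((\<phi> x)^2))"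
proof -
  define F where "F x = complex_of_real (\<phi> x)" for x
  define t where "t x y a = F x * F y * ee p (of_int ((int x - int y) * int a))" for x y a
  have step1: "FC p \<phi> (int a) * cnj (FC p \<phi> (int a)) = (1 / of_nat p ^ 2) * (\<Sum>x<p. \<Sum>y<p. t x y a)" for a
  proof -
    have "FC p \<phi> (int a) * cnj (FC p \<phi> (int a)) = (1 / of_nat p ^ 2) *
      ((\<Sum>x<p. F x * ee p (of_int (int a * int x))) * (\<Sum>y<p. F y * ee p (of_int (- int a * int y))))"
      unfolding cnj_FC by (simp add: FC_def F_def power2_eq_square)
    also have "(\<Sum>x<p. F x * ee p (of_int (int a * int x))) * (\<Sum>y<p. F y * ee p (of_int (- int a * int y)))
       = (\<Sum>x<p. \<Sum>y<p. (F x * ee p (of_int (int a * int x))) * (F y * ee p (of_int (- int a * int y))))"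
      by (rule sum_product)
    also have "\<dots> = (\<Sum>x<p. \<Sum>y<p. t x y a)"
    proof (intro sum.cong refl)
      fix x y
      have "ee p (of_int (int a * int x)) * ee p (of_int (- int a * int y)) = ee p (of_int ((int x - int y) * int a))"
        by (simp only: ee_mul_int) (rule arg_cong[where f="\<lambda>u. ee p (of_int u)"], simp add: algebra_simps)
      then show "(F x * ee p (of_int (int a * int x))) * (F y * ee p (of_int (- int a * int y))) = t x y a"
        unfolding t_def by (simp add: mult_ac)
    qed
    finally show ?thesis .
  qed
  have "(\<Sum>a<p. FC p \<phi> (int a) * cnj (FC p \<phi> (int a))) = (1 / of_nat p ^ 2) * (\<Sum>a<p. \<Sum>x<p. \<Sum>y<p. t x y a)"
    unfolding step1 by (rule sum_distrib_left[symmetric])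
  also have "(\<Sum>a<p. \<Sum>x<p. \<Sum>y<p. t x y a) = (\<Sum>x<p. \<Sum>y<p. \<Sum>a<p. t x y a)"
  proof -
    have "(\<Sum>a<p. \<Sum>x<p. \<Sum>y<p. t x y a) = (\<Sum>x<p. \<Sum>a<p. \<Sum>y<p. t x y a)" by (rule sum.swap)
    also have "\<dots> = (\<Sum>x<p. \<Sum>y<p. \<Sum>a<p. t x y a)" by (rule sum.cong[OF refl], rule sum.swap)
    finally show ?thesis .
  qed
  also have "\<dots> = (\<Sum>x<p. \<Sum>y<p. if y = x then of_nat p * (F x * F x) else 0)"
  proof (intro sum.cong refl)
    fix x y assume xy: "x \<in> {..<p}" "y \<in> {..<p}"
    have iff: "int p dvd (int x - int y) \<longleftrightarrow> y = x"
    proof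
      assume "int p dvd (int x - int y)"
      then have "[int x = int y] (mod int p)" by (simp add: cong_iff_dvd_diff)
      then have "[x = y] (mod p)" by (simp add: cong_int_iff)
      then show "y = x" using xy cong_less_modulus_unique_nat[of x y p] by simp
    qed simp
    have "(\<Sum>a<p. t x y a) = F x * F y * (\<Sum>a<p. ee p (of_int ((int x - int y) * int a)))"
      unfolding t_def by (simp add: sum_distrib_left)
    also have "\<dots> = (if y = x then of_nat p * (F x * F x) else 0)"
      using orth[OF assms, of "int x - int y"] iff by (simp add: mult_ac)
    finally show "(\<Sum>a<p. t x y a) = (if y = x then of_nat p * (F x * F x) else 0)" .
  qed
  also have "\<dots> = (\<Sum>x<p. of_nat p * (F x * F x))"
    by (rule sum.cong[OF refl]) (simp add: sum.delta)
  finally show ?thesis using assms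
    by (simp add: F_def sum_distrib_left[symmetric] power2_eq_square)
qed

lemma Parseval:
  assumes "p > 0"
  shows "(\<Sum>a<p. (cmod (FC p \<phi> (int a)))^2) = (1 / real p) * (\<Sum>x<p. (\<phi> x)^2)"
proof -
  have "complex_of_real (\<Sum>a<p. (cmod (FC p \<phi> (int a)))^2) = (\<Sum>a<p. FC p \<phi> (int a) * cnj (FC p \<phi> (int a)))"
    by (simp only: of_real_sum complex_norm_square)
  also have "\<dots> = complex_of_real ((1 / real p) * (\<Sum>x<p. (\<phi> x)^2))"
    by (simp add: Parseval_c[OF assms])
  finally show ?thesis by (simp only: of_real_eq_iff)
qed

lemma Parseval_le1:
  assumes "p > 0" "\<forall>n<p. 0 \<le> \<phi> n \<and> \<phi> n \<le> 1"
  shows "(\<Sum>a<p. (cmod (FC p \<phi> (int a)))^2) \<le> 1"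
proof -
  have "(\<Sum>x<p. (\<phi> x)^2) \<le> (\<Sum>x<p. 1)"
    by (rule sum_mono) (use assms(2) in \<open>auto simp: power_le_one\<close>)
  then show ?thesis unfolding Parseval[OF assms(1)] using assms(1) by (simp add: field_simps)
qed

lemma FC_le1:
  assumes "p > 0" "\<forall>n<p. 0 \<le> \<phi> n \<and> \<phi> n \<le> 1"
  shows "cmod (FC p \<phi> a) \<le> 1"
proof -
  have "cmod (\<Sum>x<p. of_real (\<phi> x) * ee p (of_int (a * int x))) \<le> (\<Sum>x<p. cmod (of_real (\<phi> x) * ee p (of_int (a * int x))))"
    by (rule norm_sum)
  also have "\<dots> \<le> (\<Sum>x<p. 1)"
    by (rule sum_mono) (use assms(2) in \<open>auto simp: norm_mult\<close>)
  finally have "cmod (\<Sum>x<p. of_real (\<phi> x) * ee p (of_int (a * int x))) \<le> real p" by simp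
  then show ?thesis using assms(1) unfolding FC_def by (simp add: norm_divide divide_le_eq)
qed

lemma spec_card:
  assumes "p > 0" "\<forall>n<p. 0 \<le> \<phi> n \<and> \<phi> n \<le> 1" "\<delta> > 0"
  shows "real (card {a. a < p \<and> \<delta> \<le> cmod (FC p \<phi> (int a))}) * \<delta>^2 \<le> 1"
proof -
  let ?S = "{a. a < p \<and> \<delta> \<le> cmod (FC p \<phi> (int a))}"
  have "real (card ?S) * \<delta>^2 = (\<Sum>a\<in>?S. \<delta>^2)" by simp
  also have "\<dots> \<le> (\<Sum>a\<in>?S. (cmod (FC p \<phi> (int a)))^2)"
    by (rule sum_mono) (use assms(3) in \<open>auto intro: power_mono\<close>)
  also have "\<dots> \<le> (\<Sum>a<p. (cmod (FC p \<phi> (int a)))^2)"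
    by (rule sum_mono2) auto
  also have "\<dots> \<le> 1" by (rule Parseval_le1[OF assms(1,2)])
  finally show ?thesis .
qed


type_synonym kl = "(int \<times> real) list"

definition kval :: "nat \<Rightarrow> kl \<Rightarrow> real \<Rightarrow> complex" where
  "kval p L \<beta> = sum_list (map (\<lambda>q. of_real (snd q) * ee p (of_int (fst q) * \<beta>)) L)"

definition mass :: "kl \<Rightarrow> int \<Rightarrow> real" where
  "mass L \<nu> = sum_list (map (\<lambda>q. if fst q = \<nu> then snd q else 0) L)"

definition Mmod :: "nat \<Rightarrow> kl \<Rightarrow> int \<Rightarrow> real" where
  "Mmod p L a = sum_list (map (\<lambda>q. if int p dvd (fst q + a) then snd q else 0) L)"

lemma kval_Nil[simp]: "kval p [] \<beta> = 0" by (simp add: kval_def)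
lemma kval_Cons[simp]: "kval p (q # L) \<beta> = of_real (snd q) * ee p (of_int (fst q) * \<beta>) + kval p L \<beta>"
  by (simp add: kval_def)
lemma mass_Nil[simp]: "mass [] \<nu> = 0" by (simp add: mass_def)
lemma mass_Cons[simp]: "mass (q # L) \<nu> = (if fst q = \<nu> then snd q else 0) + mass L \<nu>"
  by (simp add: mass_def)
lemma Mmod_Nil[simp]: "Mmod p [] a = 0" by (simp add: Mmod_def)
lemma Mmod_Cons[simp]: "Mmod p (q # L) a = (if int p dvd (fst q + a) then snd q else 0) + Mmod p L a"
  by (simp add: Mmod_def)

lemma dvd_small: "int p dvd x \<Longrightarrow> \<bar>x\<bar> < int p \<Longrightarrow> x = 0"
  using dvd_imp_le_int[of x "int p"] by (cases "x = 0") auto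

lemma Mmod_nonneg: "\<forall>q\<in>set L. snd q \<ge> 0 \<Longrightarrow> Mmod p L a \<ge> 0"
  by (induction L) auto

lemma Mmod_cong: "p > 0 \<Longrightarrow> [a = b] (mod int p) \<Longrightarrow> Mmod p L a = Mmod p L b"
proof (induction L)
  case (Cons q L)
  have "int p dvd (fst q + a) \<longleftrightarrow> int p dvd (fst q + b)"
    using Cons.prems(2) by (metis cong_add_lcancel cong_dvd_iff)
  then show ?case using Cons by simp
qed simp

lemma Mmod_zero_eq_mass:
  assumes "p > 0" "\<forall>q\<in>set L. \<bar>fst q\<bar> < int p"
  shows "Mmod p L 0 = mass L 0"
  using assms
proof (induction L)
  case (Cons q L)
  have "int p dvd fst q \<longleftrightarrow> fst q = 0"
  proof
    assume "int p dvd fst q"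
    then show "fst q = 0" using Cons.prems(2) by (intro dvd_small) auto
  qed simp
  then show ?case using Cons by simp
qed simp

lemma ee_shift_sum:
  assumes "p > 0"
  shows "(\<Sum>n<p. ee p (of_int \<nu> * (\<beta> + real n)) * ee p (of_int (a * int n))) =
    (if int p dvd (\<nu> + a) then of_nat p * ee p (of_int \<nu> * \<beta>) else 0)"
proof -
  have "ee p (of_int \<nu> * (\<beta> + real n)) * ee p (of_int (a * int n)) =
      ee p (of_int \<nu> * \<beta>) * ee p (of_int ((\<nu> + a) * int n))" for n
  proof -
    have "ee p (of_int \<nu> * (\<beta> + real n)) * ee p (of_int (a * int n)) =
      ee p (of_int \<nu> * (\<beta> + real n) + of_int (a * int n))" by (simp add: ee_add)
    also have "of_int \<nu> * (\<beta> + real n) + of_int (a * int n) = of_int \<nu> * \<beta> + of_int ((\<nu> + a) * int n)"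
      by (simp add: algebra_simps)
    finally show ?thesis by (simp add: ee_add)
  qed
  then have "(\<Sum>n<p. ee p (of_int \<nu> * (\<beta> + real n)) * ee p (of_int (a * int n))) =
     ee p (of_int \<nu> * \<beta>) * (\<Sum>n<p. ee p (of_int ((\<nu> + a) * int n)))"
    by (simp add: sum_distrib_left)
  then show ?thesis using orth[OF assms, of "\<nu> + a"] by simp
qed

lemma kval_shift_sum:
  assumes "p > 0"
  shows "(\<Sum>n<p. kval p L (\<beta> + real n) * ee p (of_int (a * int n))) =
    of_nat p * sum_list (map (\<lambda>q. if int p dvd (fst q + a) then of_real (snd q) * ee p (of_int (fst q) * \<beta>) else 0) L)"
proof (induction L)
  case Nil then show ?case by simp
next
  case (Cons q L)
  have "(\<Sum>n<p. kval p (q # L) (\<beta> + real n) * ee p (of_int (a * int n))) =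
     of_real (snd q) * (\<Sum>n<p. ee p (of_int (fst q) * (\<beta> + real n)) * ee p (of_int (a * int n)))
     + (\<Sum>n<p. kval p L (\<beta> + real n) * ee p (of_int (a * int n)))"
    by (simp add: algebra_simps sum.distrib sum_distrib_left)
  then show ?case using Cons ee_shift_sum[OF assms, of "fst q" \<beta> a] by (simp add: algebra_simps)
qed

lemma kval_sum_plus:
  assumes "p > 0" "\<forall>q\<in>set L. \<bar>fst q\<bar> < int p"
  shows "(\<Sum>n<p. kval p L (\<beta> + real n)) = of_nat p * of_real (mass L 0)"
proof -
  have "(\<Sum>n<p. kval p L (\<beta> + real n)) = (\<Sum>n<p. kval p L (\<beta> + real n) * ee p (of_int (0 * int n)))" by simp
  also have "\<dots> = of_nat p * sum_list (map (\<lambda>q. if int p dvd (fst q + 0) then of_real (snd q) * ee p (of_int (fst q) * \<beta>) else 0) L)"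
    by (rule kval_shift_sum[OF assms(1)])
  also have "sum_list (map (\<lambda>q. if int p dvd (fst q + 0) then of_real (snd q) * ee p (of_int (fst q) * \<beta>) else 0) L)
     = of_real (mass L 0)"
    using assms(2)
  proof (induction L)
    case (Cons q L)
    have "int p dvd fst q \<longleftrightarrow> fst q = 0"
    proof
      assume "int p dvd fst q"
      then show "fst q = 0" using Cons.prems by (intro dvd_small) auto
    qed simp
    then show ?case using Cons by simp
  qed simp
  finally show ?thesis .
qed

lemma kval_sum_fourier:
  assumes "p > 0"
  shows "(\<Sum>n<p. kval p L (real n) * ee p (of_int (a * int n))) = of_nat p * of_real (Mmod p L a)"
proof -
  have "(\<Sum>n<p. kval p L (real n) * ee p (of_int (a * int n))) = (\<Sum>n<p. kval p L (0 + real n) * ee p (of_int (a * int n)))" by simp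
  also have "\<dots> = of_nat p * sum_list (map (\<lambda>q. if int p dvd (fst q + a) then of_real (snd q) * ee p (of_int (fst q) * 0) else 0) L)"
    by (rule kval_shift_sum[OF assms(1)])
  also have "sum_list (map (\<lambda>q. if int p dvd (fst q + a) then of_real (snd q) * ee p (of_int (fst q) * 0) else 0) L)
     = of_real (Mmod p L a)"
    by (induction L) auto
  finally show ?thesis .
qed

lemma kval_conv_fourier:
  assumes "p > 0"
  shows "(\<Sum>n<p. (\<Sum>x<p. of_real (h x) * kval p L (real n - real x)) * ee p (of_int (a * int n))) =
    of_nat p * of_real (Mmod p L a) * (\<Sum>x<p. of_real (h x) * ee p (of_int (a * int x)))"
proof -
  have "(\<Sum>n<p. (\<Sum>x<p. of_real (h x) * kval p L (real n - real x)) * ee p (of_int (a * int n))) =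
     (\<Sum>x<p. of_real (h x) * (\<Sum>n<p. kval p L (- real x + real n) * ee p (of_int (a * int n))))"
  proof -
    have "(\<Sum>n<p. (\<Sum>x<p. of_real (h x) * kval p L (real n - real x)) * ee p (of_int (a * int n))) =
      (\<Sum>n<p. \<Sum>x<p. of_real (h x) * kval p L (real n - real x) * ee p (of_int (a * int n)))"
      by (simp only: sum_distrib_right)
    also have "\<dots> = (\<Sum>x<p. \<Sum>n<p. of_real (h x) * kval p L (real n - real x) * ee p (of_int (a * int n)))"
      by (rule sum.swap)
    also have "\<dots> = (\<Sum>x<p. of_real (h x) * (\<Sum>n<p. kval p L (- real x + real n) * ee p (of_int (a * int n))))"
    proof (rule sum.cong[OF refl])
      fix x
      have e: "kval p L (- real x + real n) = kval p L (real n - real x)" for n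
        by (rule arg_cong[where f="kval p L"]) simp
      show "(\<Sum>n<p. of_real (h x) * kval p L (real n - real x) * ee p (of_int (a * int n))) =
         of_real (h x) * (\<Sum>n<p. kval p L (- real x + real n) * ee p (of_int (a * int n)))"
        unfolding e by (simp add: sum_distrib_left mult.assoc)
    qed
    finally show ?thesis .
  qed
  also have "\<dots> = (\<Sum>x<p. of_real (h x) * (of_nat p * of_real (Mmod p L a) * ee p (of_int (a * int x))))"
  proof (rule sum.cong[OF refl])
    fix x
    have "sum_list (map (\<lambda>q. if int p dvd (fst q + a) then of_real (snd q) * ee p (of_int (fst q) * (- real x)) else 0) L)
       = of_real (Mmod p L a) * ee p (of_int (a * int x))"
    proof (induction L)
      case (Cons q L)
      have "int p dvd (fst q + a) \<Longrightarrow> ee p (of_int (fst q) * (- real x)) = ee p (of_int (a * int x))"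
      proof -
        assume d: "int p dvd (fst q + a)"
        have "ee p (of_int (fst q) * (- real x)) = ee p (of_int (- fst q * int x))" by simp
        also have "\<dots> = ee p (of_int (a * int x))"
        proof (rule ee_cong[OF assms])
          have "[- fst q = a] (mod int p)" using d
          proof -
            have "- fst q - a = - (fst q + a)" by simp
            then show ?thesis unfolding cong_def mod_eq_dvd_iff using d by (simp only: dvd_minus_iff)
          qed
          then show "[- fst q * int x = a * int x] (mod int p)" by (rule cong_mult) simp
        qed
        finally show ?thesis .
      qed
      then show ?case using Cons by (simp add: algebra_simps)
    qed simp
    then show "of_real (h x) * (\<Sum>n<p. kval p L (- real x + real n) * ee p (of_int (a * int n))) =
        of_real (h x) * (of_nat p * of_real (Mmod p L a) * ee p (of_int (a * int x)))"
      using kval_shift_sum[OF assms, of L "- real x" a] by simp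
  qed
  also have "\<dots> = of_nat p * of_real (Mmod p L a) * (\<Sum>x<p. of_real (h x) * ee p (of_int (a * int x)))"
  proof -
    have r: "of_real (h x) * (of_nat p * of_real (Mmod p L a) * ee p (of_int (a * int x))) =
       (of_nat p * of_real (Mmod p L a)) * (of_real (h x) * ee p (of_int (a * int x)))" for x
      by (simp only: mult_ac)
    show ?thesis by (simp only: r sum_distrib_left[symmetric])
  qed
  finally show ?thesis .
qed

lemma kval_sum_minus:
  assumes "p > 0" "\<forall>q\<in>set L. \<bar>fst q\<bar> < int p"
  shows "(\<Sum>x<p. kval p L (\<beta> - real x)) = of_nat p * of_real (mass L 0)"
  using assms(2)
proof (induction L)
  case Nil then show ?case by simp
next
  case (Cons q L)
  have single: "(\<Sum>x<p. ee p (of_int (fst q) * (\<beta> - real x))) = (if fst q = 0 then of_nat p else 0)"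
  proof -
    have "ee p (of_int (fst q) * (\<beta> - real x)) = ee p (of_int (fst q) * \<beta>) * ee p (of_int (- fst q * int x))" for x
      by (simp add: ee_add[symmetric] algebra_simps)
    then have "(\<Sum>x<p. ee p (of_int (fst q) * (\<beta> - real x))) =
       ee p (of_int (fst q) * \<beta>) * (\<Sum>x<p. ee p (of_int (- fst q * int x)))"
      by (simp add: sum_distrib_left)
    also have "\<dots> = (if fst q = 0 then of_nat p else 0)"
    proof -
      have "int p dvd - fst q \<longleftrightarrow> fst q = 0"
      proof
        assume "int p dvd - fst q"
        then have "int p dvd fst q" by simp
        then show "fst q = 0" using Cons.prems by (intro dvd_small) auto
      qed simp
      then show ?thesis using orth[OF assms(1), of "- fst q"] by auto
    qed
    finally show ?thesis .
  qed
  have "(\<Sum>x<p. kval p (q # L) (\<beta> - real x)) = of_real (snd q) * (\<Sum>x<p. ee p (of_int (fst q) * (\<beta> - real x)))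
      + (\<Sum>x<p. kval p L (\<beta> - real x))"
    by (simp add: sum.distrib sum_distrib_left)
  then show ?case using Cons single by (simp add: algebra_simps)
qed

lemma kval_mass_sum:
  assumes "finite D" "fst ` set L \<subseteq> D"
  shows "sum_list (map (\<lambda>q. of_real (snd q) * F (fst q)) L) = (\<Sum>\<nu>\<in>D. of_real (mass L \<nu>) * F \<nu>)"
  using assms(2)
proof (induction L)
  case Nil then show ?case by simp
next
  case (Cons q L)
  have "(\<Sum>\<nu>\<in>D. of_real (mass (q # L) \<nu>) * F \<nu>) =
     (\<Sum>\<nu>\<in>D. (if \<nu> = fst q then of_real (snd q) * F (fst q) else 0)) + (\<Sum>\<nu>\<in>D. of_real (mass L \<nu>) * F \<nu>)"
  proof -
    have "of_real (mass (q # L) \<nu>) * F \<nu> = (if \<nu> = fst q then of_real (snd q) * F (fst q) else 0) + of_real (mass L \<nu>) * F \<nu>" for \<nu>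
      by (auto simp: algebra_simps)
    then show ?thesis by (simp only: sum.distrib)
  qed
  also have "(\<Sum>\<nu>\<in>D. (if \<nu> = fst q then of_real (snd q) * F (fst q) else 0)) = of_real (snd q) * F (fst q)"
    using Cons.prems assms(1) by (simp add: sum.delta)
  finally show ?case using Cons by simp
qed


definition Bv :: "nat \<Rightarrow> nat \<Rightarrow> int \<Rightarrow> real \<Rightarrow> real" where
  "Bv N p s \<beta> = (1 / real N) * (cmod (\<Sum>i<N. ee p (of_int (int i * s) * \<beta>)))^2"

definition Bl :: "nat \<Rightarrow> int \<Rightarrow> kl" where
  "Bl N s = concat (map (\<lambda>i. map (\<lambda>i'. ((int i - int i') * s, 1 / real N)) [0..<N]) [0..<N])"

definition prodk :: "kl \<Rightarrow> kl \<Rightarrow> kl" where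
  "prodk A B = concat (map (\<lambda>a. map (\<lambda>b. (fst a + fst b, snd a * snd b)) B) A)"

lemma Bv_nonneg: "Bv N p s \<beta> \<ge> 0"
  by (simp add: Bv_def)

lemma kval_append[simp]: "kval p (xs @ ys) \<beta> = kval p xs \<beta> + kval p ys \<beta>"
  by (simp add: kval_def)

lemma kval_concat: "kval p (concat xss) \<beta> = sum_list (map (\<lambda>xs. kval p xs \<beta>) xss)"
  by (induction xss) auto

lemma sum_list_map_upt: "sum_list (map g [0..<N]) = (\<Sum>i<N. g i)"
  by (induction N) auto

lemma kval_map_shift: "kval p (map (\<lambda>b. (fst a + fst b, snd a * snd b)) B) \<beta> =
   of_real (snd a) * ee p (of_int (fst a) * \<beta>) * kval p B \<beta>"
  by (induction B) (auto simp: algebra_simps ee_add[symmetric])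

lemma kval_prodk: "kval p (prodk A B) \<beta> = kval p A \<beta> * kval p B \<beta>"
  unfolding prodk_def by (induction A) (auto simp: kval_map_shift algebra_simps)

lemma length_prodk: "length (prodk A B) = length A * length B"
  unfolding prodk_def by (induction A) auto

lemma set_prodk: "q \<in> set (prodk A B) \<Longrightarrow> \<exists>a\<in>set A. \<exists>b\<in>set B. q = (fst a + fst b, snd a * snd b)"
  unfolding prodk_def by auto

lemma length_Bl: "length (Bl N s) = N * N"
  unfolding Bl_def by (simp add: length_concat o_def sum_list_triv)

lemma set_Bl: "q \<in> set (Bl N s) \<Longrightarrow> snd q \<ge> 0 \<and> \<bar>fst q\<bar> \<le> int (N - 1) * \<bar>s\<bar>"
proof -
  assume "q \<in> set (Bl N s)"
  then obtain i i' where ii: "i < N" "i' < N" "q = ((int i - int i') * s, 1 / real N)"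
    unfolding Bl_def by auto
  have "\<bar>int i - int i'\<bar> \<le> int (N - 1)" using ii by auto
  then have "\<bar>(int i - int i') * s\<bar> \<le> int (N - 1) * \<bar>s\<bar>"
    by (simp add: abs_mult mult_right_mono)
  then show ?thesis using ii by simp
qed

lemma kval_Bl: "kval p (Bl N s) \<beta> = of_real (Bv N p s \<beta>)"
proof -
  define P where "P = (\<Sum>i<N. ee p (of_int (int i * s) * \<beta>))"
  have "kval p (Bl N s) \<beta> = (\<Sum>i<N. \<Sum>i'<N. of_real (1 / real N) * ee p (of_int ((int i - int i') * s) * \<beta>))"
    unfolding Bl_def kval_concat by (simp add: map_map o_def sum_list_map_upt kval_def)
  also have "\<dots> = of_real (1 / real N) * (P * cnj P)"
  proof -
    have "P * cnj P = (\<Sum>i<N. \<Sum>i'<N. ee p (of_int (int i * s) * \<beta>) * cnj (ee p (of_int (int i' * s) * \<beta>)))"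
      unfolding P_def by (simp add: sum_product)
    also have "\<dots> = (\<Sum>i<N. \<Sum>i'<N. ee p (of_int ((int i - int i') * s) * \<beta>))"
      by (intro sum.cong refl) (simp add: ee_neg[symmetric] ee_add[symmetric] algebra_simps)
    finally show ?thesis by (simp add: sum_distrib_left)
  qed
  also have "\<dots> = of_real (Bv N p s \<beta>)"
  proof -
    have "P * cnj P = of_real ((cmod P)^2)" by (rule complex_norm_square[symmetric])
    then show ?thesis unfolding Bv_def P_def by simp
  qed
  finally show ?thesis .
qed

lemma rep_exists:
  assumes "finite T"
  shows "\<exists>L. (\<forall>\<beta>. complex_of_real (\<Prod>s\<in>T. Bv N p s \<beta>) = kval p L \<beta>) \<and>
     (\<forall>q\<in>set L. snd q \<ge> 0 \<and> \<bar>fst q\<bar> \<le> int (N - 1) * (\<Sum>s\<in>T. \<bar>s\<bar>)) \<and>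
     length L \<le> N ^ (2 * card T)"
  using assms
proof (induction T rule: finite_induct)
  case empty
  show ?case by (rule exI[of _ "[(0, 1)]"]) simp
next
  case (insert s T)
  then obtain L where L: "\<forall>\<beta>. complex_of_real (\<Prod>s\<in>T. Bv N p s \<beta>) = kval p L \<beta>"
     "\<forall>q\<in>set L. snd q \<ge> 0 \<and> \<bar>fst q\<bar> \<le> int (N - 1) * (\<Sum>s\<in>T. \<bar>s\<bar>)"
     "length L \<le> N ^ (2 * card T)" by blast
  show ?case
  proof (rule exI[of _ "prodk (Bl N s) L"], intro conjI)
    show "\<forall>\<beta>. complex_of_real (\<Prod>s\<in>insert s T. Bv N p s \<beta>) = kval p (prodk (Bl N s) L) \<beta>"
    proof
    fix \<beta>
    show "complex_of_real (\<Prod>s\<in>insert s T. Bv N p s \<beta>) = kval p (prodk (Bl N s) L) \<beta>"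
      using insert L(1) by (simp add: kval_prodk kval_Bl)
    qed
  next
    show "\<forall>q\<in>set (prodk (Bl N s) L). snd q \<ge> 0 \<and> \<bar>fst q\<bar> \<le> int (N - 1) * (\<Sum>s\<in>insert s T. \<bar>s\<bar>)"
    proof
    fix q assume "q \<in> set (prodk (Bl N s) L)"
    then obtain a b where ab: "a \<in> set (Bl N s)" "b \<in> set L" "q = (fst a + fst b, snd a * snd b)"
      using set_prodk by blast
    have "\<bar>fst a + fst b\<bar> \<le> int (N - 1) * \<bar>s\<bar> + int (N - 1) * (\<Sum>s\<in>T. \<bar>s\<bar>)"
      using set_Bl[OF ab(1)] L(2) ab(2) by (smt (verit))
    also have "\<dots> = int (N - 1) * (\<Sum>s\<in>insert s T. \<bar>s\<bar>)"
      using insert by (simp add: algebra_simps)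
    finally have "\<bar>fst q\<bar> \<le> int (N - 1) * (\<Sum>s\<in>insert s T. \<bar>s\<bar>)"
      using ab by simp
    moreover have "snd q \<ge> 0"
      using set_Bl[OF ab(1)] L(2) ab by auto
    ultimately show "snd q \<ge> 0 \<and> \<bar>fst q\<bar> \<le> int (N - 1) * (\<Sum>s\<in>insert s T. \<bar>s\<bar>)"
      by simp
    qed
  next
    have "length (prodk (Bl N s) L) = N * N * length L" by (simp add: length_prodk length_Bl)
    also have "\<dots> \<le> N * N * N ^ (2 * card T)" using L(3) by simp
    also have "\<dots> = N ^ (2 * card (insert s T))" using insert by (simp add: power_add power2_eq_square)
    finally show "length (prodk (Bl N s) L) \<le> N ^ (2 * card (insert s T))" .
  qed
qed


lemma Bv_expand: "complex_of_real (Bv N p s \<beta>) =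
   (\<Sum>i<N. \<Sum>i'<N. of_real (1 / real N) * ee p (of_int ((int i - int i') * s) * \<beta>))"
  using kval_Bl[of p N s \<beta>] unfolding Bl_def kval_concat
  by (simp add: map_map o_def sum_list_map_upt kval_def)

lemma Bv_zero: "N \<ge> 1 \<Longrightarrow> Bv N p s 0 = real N"
  by (simp add: Bv_def power2_eq_square)

lemma Bv_mult_bound:
  assumes "N \<ge> 1"
  shows "Bv N p s \<beta> * (cmod (1 - ee p (of_int s * \<beta>)))^2 \<le> 4 / real N"
proof -
  define z where "z = ee p (of_int s * \<beta>)"
  have zi: "ee p (of_int (int i * s) * \<beta>) = z ^ i" for i
    by (simp add: z_def ee_pow algebra_simps)
  have P: "(\<Sum>i<N. ee p (of_int (int i * s) * \<beta>)) * (1 - z) = 1 - z ^ N"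
    unfolding zi using one_diff_power_eq[of z N] by (simp add: mult.commute)
  have "cmod (1 - z ^ N) \<le> 2"
  proof -
    have "cmod (1 - z ^ N) \<le> cmod (1::complex) + cmod (z ^ N)" by (rule norm_triangle_ineq4)
    also have "\<dots> = 2" by (simp add: z_def norm_power)
    finally show ?thesis .
  qed
  then have "(cmod (1 - z ^ N))^2 \<le> 2^2" by (intro power_mono) auto
  have "Bv N p s \<beta> * (cmod (1 - z))^2 = (1 / real N) * (cmod ((\<Sum>i<N. ee p (of_int (int i * s) * \<beta>)) * (1 - z)))^2"
    by (simp add: Bv_def norm_mult power_mult_distrib)
  also have "\<dots> = (1 / real N) * (cmod (1 - z ^ N))^2" by (simp only: P)
  also have "\<dots> \<le> (1 / real N) * 4"
    using \<open>(cmod (1 - z ^ N))^2 \<le> 2^2\<close> by (intro mult_left_mono) auto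
  finally show ?thesis by (simp add: z_def)
qed

lemma norm_one_minus_sq:
  assumes "cmod z = 1"
  shows "complex_of_real ((cmod (1 - z))^2) = 2 - z - cnj z"
proof -
  have "complex_of_real ((cmod (1 - z))^2) = (1 - z) * cnj (1 - z)" by (rule complex_norm_square)
  also have "\<dots> = 1 - z - cnj z + z * cnj z" by (simp add: algebra_simps)
  also have "z * cnj z = 1" using complex_norm_square[of z] assms by simp
  finally show ?thesis by simp
qed

definition Kf :: "nat \<Rightarrow> nat \<Rightarrow> int set \<Rightarrow> real \<Rightarrow> real" where
  "Kf N p T \<beta> = (\<Prod>s\<in>T. Bv N p s \<beta>)"

definition Zf :: "nat \<Rightarrow> nat \<Rightarrow> int set \<Rightarrow> real" where
  "Zf N p T = (\<Sum>n<p. Kf N p T (real n))"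

definition gf :: "nat \<Rightarrow> nat \<Rightarrow> int set \<Rightarrow> (nat \<Rightarrow> real) \<Rightarrow> real \<Rightarrow> real" where
  "gf N p T h \<alpha> = (1 / Zf N p T) * (\<Sum>x<p. h x * Kf N p T (\<alpha> - real x))"

definition kap :: "nat \<Rightarrow> nat \<Rightarrow> int set \<Rightarrow> int \<Rightarrow> real" where
  "kap N p T a = Re (\<Sum>n<p. of_real (Kf N p T (real n)) * ee p (of_int (a * int n))) / Zf N p T"

lemma Kf_nonneg: "Kf N p T \<beta> \<ge> 0"
  unfolding Kf_def by (intro prod_nonneg) (simp add: Bv_nonneg)

context
  fixes N p :: nat and T :: "int set"
  assumes p0: "p > 0" and N1: "N \<ge> 1" and finT: "finite T"
    and small: "int (N - 1) * (\<Sum>s\<in>T. \<bar>s\<bar>) < int p"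
begin

lemma rep:
  obtains L where "\<forall>\<beta>. complex_of_real (Kf N p T \<beta>) = kval p L \<beta>"
    "\<forall>q\<in>set L. snd q \<ge> 0 \<and> \<bar>fst q\<bar> < int p" "length L \<le> N ^ (2 * card T)"
    "\<forall>q\<in>set L. \<bar>fst q\<bar> \<le> int (N - 1) * (\<Sum>s\<in>T. \<bar>s\<bar>)"
proof -
  obtain L where L: "\<forall>\<beta>. complex_of_real (\<Prod>s\<in>T. Bv N p s \<beta>) = kval p L \<beta>"
     "\<forall>q\<in>set L. snd q \<ge> 0 \<and> \<bar>fst q\<bar> \<le> int (N - 1) * (\<Sum>s\<in>T. \<bar>s\<bar>)"
     "length L \<le> N ^ (2 * card T)"
    using rep_exists[OF finT, of N p] by blast
  show ?thesis
  proof (rule that[of L])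
    show "\<forall>\<beta>. complex_of_real (Kf N p T \<beta>) = kval p L \<beta>" using L(1) by (simp add: Kf_def)
    show "\<forall>q\<in>set L. snd q \<ge> 0 \<and> \<bar>fst q\<bar> < int p" using L(2) small by fastforce
  qed (use L in auto)
qed

lemma K_sum_plus: "(\<Sum>n<p. Kf N p T (\<beta> + real n)) = Zf N p T"
proof -
  obtain L where L: "\<forall>\<beta>. complex_of_real (Kf N p T \<beta>) = kval p L \<beta>"
    "\<forall>q\<in>set L. snd q \<ge> 0 \<and> \<bar>fst q\<bar> < int p" by (rule rep)
  have fq: "\<forall>q\<in>set L. \<bar>fst q\<bar> < int p" using L(2) by auto
  have "complex_of_real (\<Sum>n<p. Kf N p T (\<beta> + real n)) = of_nat p * of_real (mass L 0)"
    using kval_sum_plus[OF p0 fq, of \<beta>] L(1) by simp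
  moreover have "complex_of_real (Zf N p T) = of_nat p * of_real (mass L 0)"
    using kval_sum_plus[OF p0 fq, of 0] L(1) by (simp add: Zf_def)
  ultimately show ?thesis by (metis of_real_eq_iff)
qed

lemma K_sum_minus: "(\<Sum>x<p. Kf N p T (\<beta> - real x)) = Zf N p T"
proof -
  obtain L where L: "\<forall>\<beta>. complex_of_real (Kf N p T \<beta>) = kval p L \<beta>"
    "\<forall>q\<in>set L. snd q \<ge> 0 \<and> \<bar>fst q\<bar> < int p" by (rule rep)
  have fq: "\<forall>q\<in>set L. \<bar>fst q\<bar> < int p" using L(2) by auto
  have "complex_of_real (\<Sum>x<p. Kf N p T (\<beta> - real x)) = of_nat p * of_real (mass L 0)"
    using kval_sum_minus[OF p0 fq, of \<beta>] L(1) by simp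
  moreover have "complex_of_real (Zf N p T) = of_nat p * of_real (mass L 0)"
    using kval_sum_plus[OF p0 fq, of 0] L(1) by (simp add: Zf_def)
  ultimately show ?thesis by (metis of_real_eq_iff)
qed

lemma Z_pos: "Zf N p T > 0"
proof -
  have "Kf N p T 0 = real N ^ card T" unfolding Kf_def using Bv_zero[OF N1] by simp
  then have "Kf N p T (real 0) > 0" using N1 by simp
  also have "Kf N p T (real 0) \<le> Zf N p T" unfolding Zf_def
    by (rule member_le_sum) (use p0 Kf_nonneg in auto)
  finally show ?thesis .
qed

lemma g_bounds:
  assumes "\<forall>n<p. 0 \<le> h n \<and> h n \<le> 1"
  shows "0 \<le> gf N p T h \<alpha> \<and> gf N p T h \<alpha> \<le> 1"
proof
  have "(\<Sum>x<p. h x * Kf N p T (\<alpha> - real x)) \<ge> 0"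
    by (intro sum_nonneg mult_nonneg_nonneg) (use assms Kf_nonneg in auto)
  then show "0 \<le> gf N p T h \<alpha>" unfolding gf_def using Z_pos by simp
  have "(\<Sum>x<p. h x * Kf N p T (\<alpha> - real x)) \<le> (\<Sum>x<p. Kf N p T (\<alpha> - real x))"
    by (intro sum_mono) (use assms Kf_nonneg in \<open>auto intro: mult_left_le_one_le\<close>)
  then show "gf N p T h \<alpha> \<le> 1" unfolding gf_def K_sum_minus using Z_pos by simp
qed

lemma g_sum: "(\<Sum>n<p. gf N p T h (real n)) = (\<Sum>x<p. h x)"
proof -
  have "(\<Sum>n<p. \<Sum>x<p. h x * Kf N p T (real n - real x)) = (\<Sum>x<p. \<Sum>n<p. h x * Kf N p T (real n - real x))"
    by (rule sum.swap)
  also have "\<dots> = (\<Sum>x<p. h x * (\<Sum>n<p. Kf N p T (- real x + real n)))"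
    by (simp add: sum_distrib_left)
  also have "\<dots> = (\<Sum>x<p. h x * Zf N p T)" by (simp only: K_sum_plus)
  finally have "(\<Sum>n<p. \<Sum>x<p. h x * Kf N p T (real n - real x)) = Zf N p T * (\<Sum>x<p. h x)"
    by (simp add: sum_distrib_right mult.commute)
  then show ?thesis unfolding gf_def using Z_pos by (simp add: sum_divide_distrib[symmetric])
qed

lemma kap_Mmod:
  obtains L where "\<forall>a. kap N p T a = real p * Mmod p L a / Zf N p T"
    "\<forall>a. (\<Sum>n<p. of_real (Kf N p T (real n)) * ee p (of_int (a * int n))) = of_real (real p * Mmod p L a)"
    "\<forall>q\<in>set L. snd q \<ge> 0"
proof -
  obtain L where L: "\<forall>\<beta>. complex_of_real (Kf N p T \<beta>) = kval p L \<beta>"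
    "\<forall>q\<in>set L. snd q \<ge> 0 \<and> \<bar>fst q\<bar> < int p" by (rule rep)
  have e: "(\<Sum>n<p. of_real (Kf N p T (real n)) * ee p (of_int (a * int n))) = of_real (real p * Mmod p L a)" for a
    using kval_sum_fourier[OF p0, of L a] L(1) by simp
  show ?thesis
  proof (rule that[of L])
    show "\<forall>a. kap N p T a = real p * Mmod p L a / Zf N p T" unfolding kap_def using e by simp
  qed (use e L(2) in auto)
qed

lemma kap_abs: "\<bar>kap N p T a\<bar> \<le> 1"
proof -
  have "\<bar>Re (\<Sum>n<p. of_real (Kf N p T (real n)) * ee p (of_int (a * int n)))\<bar> \<le>
      cmod (\<Sum>n<p. of_real (Kf N p T (real n)) * ee p (of_int (a * int n)))" by (rule abs_Re_le_cmod)
  also have "\<dots> \<le> (\<Sum>n<p. cmod (of_real (Kf N p T (real n)) * ee p (of_int (a * int n))))" by (rule norm_sum)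
  also have "\<dots> = Zf N p T" unfolding Zf_def by (simp add: norm_mult Kf_nonneg)
  finally have A: "\<bar>Re (\<Sum>n<p. of_real (Kf N p T (real n)) * ee p (of_int (a * int n)))\<bar> \<le> Zf N p T" .
  show ?thesis unfolding kap_def abs_divide using Z_pos A by (simp add: divide_le_eq_1)
qed

lemma kap_cong: "[a = b] (mod int p) \<Longrightarrow> kap N p T a = kap N p T b"
proof -
  assume ab: "[a = b] (mod int p)"
  obtain L where L: "\<forall>a. kap N p T a = real p * Mmod p L a / Zf N p T" by (rule kap_Mmod)
  show ?thesis using L Mmod_cong[OF p0 ab] by simp
qed

lemma FC_gf: "FC p (\<lambda>n. gf N p T h (real n)) a = of_real (kap N p T a) * FC p h a"
proof -
  obtain L where L: "\<forall>\<beta>. complex_of_real (Kf N p T \<beta>) = kval p L \<beta>"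
    "\<forall>q\<in>set L. snd q \<ge> 0 \<and> \<bar>fst q\<bar> < int p" by (rule rep)
  obtain L' where L': "\<forall>a. kap N p T a = real p * Mmod p L' a / Zf N p T"
    "\<forall>a. (\<Sum>n<p. of_real (Kf N p T (real n)) * ee p (of_int (a * int n))) = of_real (real p * Mmod p L' a)"
    by (rule kap_Mmod)
  have MM: "Mmod p L a = Mmod p L' a"
  proof -
    have "of_nat p * of_real (Mmod p L a) = (\<Sum>n<p. kval p L (real n) * ee p (of_int (a * int n)))"
      by (rule kval_sum_fourier[OF p0, symmetric])
    also have "\<dots> = (\<Sum>n<p. of_real (Kf N p T (real n)) * ee p (of_int (a * int n)))"
      using L(1) by simp
    also have "\<dots> = of_real (real p * Mmod p L' a)" using L'(2) by simp
    finally show ?thesis using p0 by simp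
  qed
  have "FC p (\<lambda>n. gf N p T h (real n)) a = (1 / of_nat p) * (1 / of_real (Zf N p T)) *
      (\<Sum>n<p. (\<Sum>x<p. of_real (h x) * kval p L (real n - real x)) * ee p (of_int (a * int n)))"
    unfolding FC_def gf_def using L(1)
    by (simp add: sum_distrib_left sum_distrib_right mult_ac)
  also have "\<dots> = (1 / of_nat p) * (1 / of_real (Zf N p T)) *
      (of_nat p * of_real (Mmod p L a) * (\<Sum>x<p. of_real (h x) * ee p (of_int (a * int x))))"
    by (simp only: kval_conv_fourier[OF p0])
  also have "\<dots> = of_real (kap N p T a) * FC p h a"
    unfolding FC_def using L'(1) MM p0 by simp
  finally show ?thesis .
qed

lemma kap_T:
  assumes "s \<in> T"
  shows "kap N p T s \<ge> 1 - 4 / real N"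
proof -
  define R where "R \<beta> = (\<Prod>s'\<in>T - {s}. Bv N p s' \<beta>)" for \<beta>
  have KR: "Kf N p T \<beta> = Bv N p s \<beta> * R \<beta>" for \<beta>
    unfolding Kf_def R_def using finT assms by (simp add: prod.remove)
  have Rnn: "R \<beta> \<ge> 0" for \<beta> unfolding R_def by (intro prod_nonneg) (simp add: Bv_nonneg)
  obtain LR where LR: "\<forall>\<beta>. complex_of_real (\<Prod>s'\<in>T - {s}. Bv N p s' \<beta>) = kval p LR \<beta>"
     "\<forall>q\<in>set LR. snd q \<ge> 0 \<and> \<bar>fst q\<bar> \<le> int (N - 1) * (\<Sum>s\<in>T - {s}. \<bar>s\<bar>)"
    using rep_exists[of "T - {s}" N p] finT by blast
  have LRw: "\<forall>q\<in>set LR. snd q \<ge> 0" using LR(2) by auto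
  have RF: "(\<Sum>n<p. of_real (R (real n)) * ee p (of_int (a * int n))) = of_nat p * of_real (Mmod p LR a)" for a
    using kval_sum_fourier[OF p0, of LR a] LR(1) unfolding R_def by simp
  have RZ: "(\<Sum>n<p. R (real n)) \<le> Zf N p T"
  proof -
    have "complex_of_real (Zf N p T) = (\<Sum>n<p. of_real (Bv N p s (real n)) * of_real (R (real n)))"
      unfolding Zf_def KR by simp
    also have "\<dots> = (\<Sum>n<p. \<Sum>i<N. \<Sum>i'<N. of_real (1 / real N) *
        (of_real (R (real n)) * ee p (of_int ((int i - int i') * s * int n))))"
      unfolding Bv_expand by (simp add: sum_distrib_left sum_distrib_right mult_ac)
    also have "\<dots> = (\<Sum>i<N. \<Sum>i'<N. of_real (1 / real N) *
        (\<Sum>n<p. of_real (R (real n)) * ee p (of_int ((int i - int i') * s * int n))))"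
    proof -
      have "(\<Sum>n<p. \<Sum>i<N. \<Sum>i'<N. of_real (1 / real N) *
        (of_real (R (real n)) * ee p (of_int ((int i - int i') * s * int n))))
        = (\<Sum>i<N. \<Sum>n<p. \<Sum>i'<N. of_real (1 / real N) *
        (of_real (R (real n)) * ee p (of_int ((int i - int i') * s * int n))))" by (rule sum.swap)
      also have "\<dots> = (\<Sum>i<N. \<Sum>i'<N. \<Sum>n<p. of_real (1 / real N) *
        (of_real (R (real n)) * ee p (of_int ((int i - int i') * s * int n))))"
        by (rule sum.cong[OF refl], rule sum.swap)
      finally show ?thesis by (simp only: sum_distrib_left)
    qed
    also have "\<dots> = (\<Sum>i<N. \<Sum>i'<N. of_real (1 / real N * (real p * Mmod p LR ((int i - int i') * s))))"
      by (simp only: RF) simp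
    finally have Zeq: "Zf N p T = (\<Sum>i<N. \<Sum>i'<N. 1 / real N * (real p * Mmod p LR ((int i - int i') * s)))"
      by (simp only: of_real_sum[symmetric] of_real_eq_iff)
    have nn: "\<And>x. 0 \<le> 1 / real N * (real p * Mmod p LR x)"
      using Mmod_nonneg[OF LRw] by simp
    have "(\<Sum>i<N. 1 / real N * (real p * Mmod p LR 0)) \<le> (\<Sum>i<N. \<Sum>i'<N. 1 / real N * (real p * Mmod p LR ((int i - int i') * s)))"
    proof (rule sum_mono)
      fix i assume i: "i \<in> {..<N}"
      have "1 / real N * (real p * Mmod p LR ((int i - int i) * s)) \<le> (\<Sum>i'<N. 1 / real N * (real p * Mmod p LR ((int i - int i') * s)))"
        by (rule member_le_sum[of i]) (rule i, rule nn, simp)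
      then show "1 / real N * (real p * Mmod p LR 0) \<le> (\<Sum>i'<N. 1 / real N * (real p * Mmod p LR ((int i - int i') * s)))"
        by simp
    qed
    also have "\<dots> = Zf N p T" by (rule Zeq[symmetric])
    finally have A: "(\<Sum>i<N. 1 / real N * (real p * Mmod p LR 0)) \<le> Zf N p T" .
    have B: "(\<Sum>i<N. 1 / real N * (real p * Mmod p LR 0)) = real p * Mmod p LR 0"
      using N1 by simp
    have C: "complex_of_real (\<Sum>n<p. R (real n)) = complex_of_real (real p * Mmod p LR 0)"
      using RF[of 0] by simp
    then have "(\<Sum>n<p. R (real n)) = real p * Mmod p LR 0"
      by (simp only: of_real_eq_iff)
    then show ?thesis using A B by simp
  qed
  obtain L where L: "\<forall>a. kap N p T a = real p * Mmod p L a / Zf N p T"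
    "\<forall>a. (\<Sum>n<p. of_real (Kf N p T (real n)) * ee p (of_int (a * int n))) = of_real (real p * Mmod p L a)"
    by (rule kap_Mmod)
  have "complex_of_real (2 * Zf N p T - real p * Mmod p L s - real p * Mmod p L (- s)) =
     (\<Sum>n<p. of_real (Kf N p T (real n)) * (2 - ee p (of_int (s * int n)) - ee p (of_int (- s * int n))))"
    using L(2)[rule_format, of s, symmetric] L(2)[rule_format, of "- s", symmetric]
    unfolding Zf_def by (simp add: sum_subtractf sum.distrib algebra_simps sum_distrib_left)
  also have "\<dots> = (\<Sum>n<p. of_real (Kf N p T (real n) * (cmod (1 - ee p (of_int s * real n)))^2))"
  proof (rule sum.cong[OF refl])
    fix n
    have "complex_of_real ((cmod (1 - ee p (of_int s * real n)))^2) = 2 - ee p (of_int s * real n) - cnj (ee p (of_int s * real n))"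
      by (rule norm_one_minus_sq) simp
    then show "of_real (Kf N p T (real n)) * (2 - ee p (of_int (s * int n)) - ee p (of_int (- s * int n))) =
       of_real (Kf N p T (real n) * (cmod (1 - ee p (of_int s * real n)))^2)"
      by (simp add: ee_neg[symmetric])
  qed
  finally have eq2: "2 * Zf N p T - real p * Mmod p L s - real p * Mmod p L (- s) =
     (\<Sum>n<p. Kf N p T (real n) * (cmod (1 - ee p (of_int s * real n)))^2)"
    by (simp only: of_real_sum[symmetric] of_real_eq_iff)
  also have "\<dots> \<le> (\<Sum>n<p. 4 / real N * R (real n))"
  proof (rule sum_mono)
    fix n
    have "Kf N p T (real n) * (cmod (1 - ee p (of_int s * real n)))^2 =
       R (real n) * (Bv N p s (real n) * (cmod (1 - ee p (of_int s * real n)))^2)"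
      unfolding KR by (simp add: mult_ac)
    also have "\<dots> \<le> R (real n) * (4 / real N)"
      by (rule mult_left_mono[OF Bv_mult_bound[OF N1] Rnn])
    finally show "Kf N p T (real n) * (cmod (1 - ee p (of_int s * real n)))^2 \<le> 4 / real N * R (real n)"
      by (simp add: mult_ac)
  qed
  also have "\<dots> = 4 / real N * (\<Sum>n<p. R (real n))" by (simp add: sum_distrib_left)
  also have "\<dots> \<le> 4 / real N * Zf N p T" using RZ by (intro mult_left_mono) auto
  finally have main: "2 * Zf N p T - real p * Mmod p L s - real p * Mmod p L (- s) \<le> 4 / real N * Zf N p T" .
  have k1: "kap N p T (- s) \<le> 1" using kap_abs[of "- s"] by simp
  have "kap N p T s + kap N p T (- s) \<ge> 2 - 4 / real N"
  proof -
    have "kap N p T s + kap N p T (- s) = (real p * Mmod p L s + real p * Mmod p L (- s)) / Zf N p T"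
      using L(1) by (simp add: add_divide_distrib)
    also have "\<dots> \<ge> (2 * Zf N p T - 4 / real N * Zf N p T) / Zf N p T"
      using main Z_pos by (intro divide_right_mono) auto
    also have "(2 * Zf N p T - 4 / real N * Zf N p T) / Zf N p T = 2 - 4 / real N"
      using Z_pos by (simp add: diff_divide_distrib)
    finally show ?thesis .
  qed
  then show ?thesis using k1 by simp
qed

end


lemma cube_aux:
  fixes c x y :: real
  assumes "0 \<le> c" "c \<le> x" "x \<le> 1" "c \<le> y" "y \<le> 1"
  shows "\<bar>1 - x^2 * y\<bar> \<le> 3 * (1 - c)"
proof -
  have x2: "c^2 \<le> x^2" using assms by (intro power_mono) auto
  have "x^2 \<le> 1" using assms by (simp add: power_le_one)
  have lo: "c^2 * c \<le> x^2 * y" using x2 assms by (intro mult_mono) auto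
  have hi: "x^2 * y \<le> 1" using \<open>x^2 \<le> 1\<close> assms
    by (intro mult_le_one) auto
  have "c^2 \<le> 1" using assms by (simp add: power_le_one)
  have "(1 - c) * (1 + c + c^2) \<le> (1 - c) * 3"
    using assms \<open>c^2 \<le> 1\<close> by (intro mult_left_mono) auto
  moreover have "(1 - c) * (1 + c + c^2) = 1 - c^2 * c" by (simp add: algebra_simps power2_eq_square)
  ultimately have "1 - c^2 * c \<le> 3 * (1 - c)" by simp
  then show ?thesis using lo hi by simp
qed

context
  fixes N p :: nat and T :: "int set"
  assumes p0: "p > 0" and N1: "N \<ge> 1" and finT: "finite T"
    and small: "int (N - 1) * (\<Sum>s\<in>T. \<bar>s\<bar>) < int p"
begin

lemma Lambda3_close:
  assumes h01: "\<forall>n<p. 0 \<le> h n \<and> h n \<le> 1" and d0: "\<delta> > 0" and N4: "N \<ge> 4"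
    and spec: "\<forall>a<p. \<delta> \<le> cmod (FC p h (- 2 * int a)) \<longrightarrow>
        (\<exists>s\<in>T. [int a = s] (mod int p)) \<and> (\<exists>s\<in>T. [- 2 * int a = s] (mod int p))"
  shows "\<bar>zp_Lambda3 p (\<lambda>n. gf N p T h (real n)) - zp_Lambda3 p h\<bar> \<le> 2 * \<delta> + 12 / real N"
proof -
  define H where "H a = FC p h a" for a
  define k where "k a = kap N p T a" for a
  have kabs: "\<bar>k a\<bar> \<le> 1" for a unfolding k_def by (rule kap_abs[OF p0 N1 finT small])
  have Hle: "cmod (H a) \<le> 1" for a unfolding H_def by (rule FC_le1[OF p0 h01])
  have "complex_of_real (zp_Lambda3 p (\<lambda>n. gf N p T h (real n)) - zp_Lambda3 p h) =
     (\<Sum>a<p. (of_real (k (int a)) * H (int a))^2 * (of_real (k (- 2 * int a)) * H (- 2 * int a)))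
     - (\<Sum>a<p. H (int a) ^ 2 * H (- 2 * int a))"
    unfolding of_real_diff Lambda3_fourier[OF p0] H_def k_def FC_gf[OF p0 N1 finT small] by simp
  also have "\<dots> = - (\<Sum>a<p. H (int a) ^ 2 * H (- 2 * int a) * of_real (1 - k (int a) ^ 2 * k (- 2 * int a)))"
  proof -
    have pt: "(of_real (k (int a)) * H (int a))^2 * (of_real (k (- 2 * int a)) * H (- 2 * int a)) - H (int a) ^ 2 * H (- 2 * int a)
      = - (H (int a) ^ 2 * H (- 2 * int a) * of_real (1 - k (int a) ^ 2 * k (- 2 * int a)))" for a
      by (simp add: algebra_simps power2_eq_square)
    show ?thesis by (simp only: sum_subtractf[symmetric] pt sum_negf)
  qed
  finally have F: "complex_of_real (zp_Lambda3 p (\<lambda>n. gf N p T h (real n)) - zp_Lambda3 p h) =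
     - (\<Sum>a<p. H (int a) ^ 2 * H (- 2 * int a) * of_real (1 - k (int a) ^ 2 * k (- 2 * int a)))" .
  have "\<bar>zp_Lambda3 p (\<lambda>n. gf N p T h (real n)) - zp_Lambda3 p h\<bar> =
     cmod (complex_of_real (zp_Lambda3 p (\<lambda>n. gf N p T h (real n)) - zp_Lambda3 p h))"
    by (simp only: norm_of_real)
  also have "\<dots> = cmod (\<Sum>a<p. H (int a) ^ 2 * H (- 2 * int a) * of_real (1 - k (int a) ^ 2 * k (- 2 * int a)))"
    by (simp only: F norm_minus_cancel)
  also have "\<dots> \<le> (\<Sum>a<p. cmod (H (int a) ^ 2 * H (- 2 * int a) * of_real (1 - k (int a) ^ 2 * k (- 2 * int a))))"
    by (rule norm_sum)
  also have "\<dots> \<le> (\<Sum>a<p. (cmod (H (int a)))^2 * (2 * \<delta> + 12 / real N))"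
  proof (rule sum_mono)
    fix a assume a: "a \<in> {..<p}"
    have eq: "cmod (H (int a) ^ 2 * H (- 2 * int a) * of_real (1 - k (int a) ^ 2 * k (- 2 * int a))) =
       (cmod (H (int a)))^2 * (cmod (H (- 2 * int a)) * \<bar>1 - k (int a) ^ 2 * k (- 2 * int a)\<bar>)"
      by (simp only: norm_mult norm_power norm_of_real mult.assoc)
    have "cmod (H (- 2 * int a)) * \<bar>1 - k (int a) ^ 2 * k (- 2 * int a)\<bar> \<le> 2 * \<delta> + 12 / real N"
    proof (cases "\<delta> \<le> cmod (H (- 2 * int a))")
      case True
      then obtain s s' where ss: "s \<in> T" "[int a = s] (mod int p)" "s' \<in> T" "[- 2 * int a = s'] (mod int p)"
        using spec a unfolding H_def by auto
      have k1: "k (int a) \<ge> 1 - 4 / real N"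
        unfolding k_def kap_cong[OF p0 N1 finT small ss(2)] by (rule kap_T[OF p0 N1 finT small ss(1)])
      have k2: "k (- 2 * int a) \<ge> 1 - 4 / real N"
        unfolding k_def kap_cong[OF p0 N1 finT small ss(4)] by (rule kap_T[OF p0 N1 finT small ss(3)])
      have c0: "0 \<le> 1 - 4 / real N" using N4 by (simp add: field_simps)
      have "\<bar>1 - k (int a) ^ 2 * k (- 2 * int a)\<bar> \<le> 3 * (1 - (1 - 4 / real N))"
        by (rule cube_aux[OF c0 k1 _ k2]) (use kabs in \<open>auto simp: abs_le_iff\<close>)
      then have "\<bar>1 - k (int a) ^ 2 * k (- 2 * int a)\<bar> \<le> 12 / real N" by simp
      then have "cmod (H (- 2 * int a)) * \<bar>1 - k (int a) ^ 2 * k (- 2 * int a)\<bar> \<le> 1 * (12 / real N)"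
        using Hle by (intro mult_mono) auto
      then show ?thesis using d0 by simp
    next
      case False
      have "\<bar>k (int a) ^ 2 * k (- 2 * int a)\<bar> \<le> 1"
      proof -
        have "\<bar>k (int a)\<bar> ^ 2 \<le> 1" using power_mono[OF kabs[of "int a"] abs_ge_zero, of 2] by simp
        then have "\<bar>k (int a)\<bar> ^ 2 * \<bar>k (- 2 * int a)\<bar> \<le> 1"
          using kabs[of "- 2 * int a"] by (intro mult_le_one) auto
        then show ?thesis by (simp add: abs_mult power_abs)
      qed
      then have "\<bar>1 - k (int a) ^ 2 * k (- 2 * int a)\<bar> \<le> 2" by simp
      then have "cmod (H (- 2 * int a)) * \<bar>1 - k (int a) ^ 2 * k (- 2 * int a)\<bar> \<le> \<delta> * 2"
        using False d0 by (intro mult_mono) auto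
      moreover have "0 \<le> 12 / real N" by simp
      ultimately show ?thesis by linarith
    qed
    then show "cmod (H (int a) ^ 2 * H (- 2 * int a) * of_real (1 - k (int a) ^ 2 * k (- 2 * int a))) \<le>
        (cmod (H (int a)))^2 * (2 * \<delta> + 12 / real N)"
      unfolding eq by (intro mult_left_mono) auto
  qed
  also have "\<dots> = (\<Sum>a<p. (cmod (H (int a)))^2) * (2 * \<delta> + 12 / real N)"
    by (simp add: sum_distrib_right)
  also have "\<dots> \<le> 1 * (2 * \<delta> + 12 / real N)"
    using Parseval_le1[OF p0 h01] d0 unfolding H_def by (intro mult_right_mono) auto
  finally show ?thesis by simp
qed

end


lemma dil_bij:
  fixes p t :: nat
  assumes "p > 0" "coprime t p"
  shows "bij_betw (\<lambda>x. (t * x) mod p) {..<p} {..<p}"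
proof (rule bij_modp[OF assms(1)])
  fix x y assume "x < p" "y < p" "[t * x = t * y] (mod p)"
  then show "x = y" using assms(2) cong_mult_lcancel_nat[of t p x y] cong_less_modulus_unique_nat[of x y p]
    by auto
qed

lemma dil_mean:
  assumes "p > 0" "coprime t p"
  shows "zp_mean p (\<lambda>x. f ((t * x) mod p)) = zp_mean p f"
  unfolding zp_mean_def using sum.reindex_bij_betw[OF dil_bij[OF assms], of f] by simp

lemma dil_Lambda3:
  assumes "p > 0" "coprime t p"
  shows "zp_Lambda3 p (\<lambda>x. f ((t * x) mod p)) = zp_Lambda3 p f"
proof -
  define F where "F n d = f n * f ((n + d) mod p) * f ((n + 2 * d) mod p)" for n d
  have e1: "(t * ((n + d) mod p)) mod p = ((t * n) mod p + (t * d) mod p) mod p" for n d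
  proof -
    have "(t * ((n + d) mod p)) mod p = (t * (n + d)) mod p" by (rule mod_mult_right_eq)
    also have "\<dots> = (t * n + t * d) mod p" by (simp only: distrib_left)
    also have "\<dots> = ((t * n) mod p + (t * d) mod p) mod p" by (rule mod_add_eq[symmetric])
    finally show ?thesis .
  qed
  have e2: "(t * ((n + 2 * d) mod p)) mod p = ((t * n) mod p + 2 * ((t * d) mod p)) mod p" for n d
  proof -
    have "(t * ((n + 2 * d) mod p)) mod p = (t * (n + 2 * d)) mod p" by (rule mod_mult_right_eq)
    also have "\<dots> = (t * n + 2 * (t * d)) mod p" by (simp only: distrib_left mult.left_commute)
    also have "\<dots> = ((t * n) mod p + (2 * (t * d)) mod p) mod p" by (rule mod_add_eq[symmetric])
    also have "(2 * (t * d)) mod p = (2 * ((t * d) mod p)) mod p" by (rule mod_mult_right_eq[symmetric])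
    also have "((t * n) mod p + (2 * ((t * d) mod p)) mod p) mod p = ((t * n) mod p + 2 * ((t * d) mod p)) mod p"
      by (rule mod_add_right_eq)
    finally show ?thesis .
  qed
  have "(\<Sum>n<p. \<Sum>d<p. f ((t * n) mod p) * f ((t * ((n + d) mod p)) mod p) * f ((t * ((n + 2 * d) mod p)) mod p))
      = (\<Sum>n<p. \<Sum>d<p. F ((t * n) mod p) ((t * d) mod p))"
  proof (intro sum.cong refl)
    fix n d
    show "f ((t * n) mod p) * f ((t * ((n + d) mod p)) mod p) * f ((t * ((n + 2 * d) mod p)) mod p) =
       F ((t * n) mod p) ((t * d) mod p)"
      unfolding F_def by (simp only: e1[of n d] e2[of n d])
  qed
  also have "\<dots> = (\<Sum>n<p. \<Sum>d<p. F ((t * n) mod p) d)"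
    by (rule sum.cong[OF refl], rule sum.reindex_bij_betw[OF dil_bij[OF assms]])
  also have "\<dots> = (\<Sum>n<p. \<Sum>d<p. F n d)"
    by (rule sum.reindex_bij_betw[OF dil_bij[OF assms], of "\<lambda>n. \<Sum>d<p. F n d"])
  finally show ?thesis unfolding zp_Lambda3_def F_def by simp
qed

lemma dil_FC:
  fixes p t u :: nat
  assumes "p > 0" "coprime t p" "[t * u = 1] (mod p)"
  shows "FC p (\<lambda>x. f ((t * x) mod p)) b = FC p f (b * int u)"
proof -
  have ee_eq: "ee p (of_int (b * int x)) = ee p (of_int (b * int u * int ((t * x) mod p)))" for x
  proof (rule ee_cong[OF assms(1)])
    have "[u * ((t * x) mod p) = u * (t * x)] (mod p)" by (simp add: cong_def mod_mult_right_eq)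
    also have "[u * (t * x) = (t * u) * x] (mod p)" by (simp add: mult_ac)
    also have "[(t * u) * x = 1 * x] (mod p)" by (rule cong_mult[OF assms(3)]) simp
    finally have "[int u * int ((t * x) mod p) = int x] (mod int p)"
      by (simp add: cong_int_iff[symmetric])
    then have "[b * (int u * int ((t * x) mod p)) = b * int x] (mod int p)" by (rule cong_mult[OF cong_refl])
    then show "[b * int x = b * int u * int ((t * x) mod p)] (mod int p)" by (simp add: cong_sym_eq mult.assoc)
  qed
  have "(\<Sum>x<p. of_real (f ((t * x) mod p)) * ee p (of_int (b * int x))) =
      (\<Sum>x<p. of_real (f ((t * x) mod p)) * ee p (of_int (b * int u * int ((t * x) mod p))))"
    using ee_eq by simp
  also have "\<dots> = (\<Sum>y<p. of_real (f y) * ee p (of_int (b * int u * int y)))"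
    by (rule sum.reindex_bij_betw[OF dil_bij[OF assms(1,2)], of "\<lambda>y. of_real (f y) * ee p (of_int (b * int u * int y))"])
  finally show ?thesis unfolding FC_def by simp
qed

lemma dirichlet:
  fixes A :: "nat set"
  assumes "finite A" "card A \<le> k" "M \<ge> 1" "M ^ k < p"
  shows "\<exists>t. 1 \<le> t \<and> t < p \<and> (\<forall>c\<in>A. \<exists>s::int. [s = int t * int c] (mod int p) \<and> real_of_int \<bar>s\<bar> * real M < real p)"
proof -
  define B where "B t = restrict (\<lambda>c. ((t * c) mod p) * M div p) A" for t
  have p0: "p > 0" using assms(4) by simp
  have Bin: "B t \<in> A \<rightarrow>\<^sub>E {..<M}" for t
  proof -
    have "((t * c) mod p) * M div p < M" for c
    proof -
      have "((t * c) mod p) * M < p * M" using p0 assms(3) by simp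
      then show ?thesis by (simp add: div_less_iff_less_mult mult.commute p0)
    qed
    then show ?thesis unfolding B_def by auto
  qed
  have cardPi: "card (A \<rightarrow>\<^sub>E {..<M}) = M ^ card A"
    using assms(1) by (simp add: card_PiE)
  have "M ^ card A \<le> M ^ k" using assms(2,3) by (simp add: power_increasing)
  then have "card (A \<rightarrow>\<^sub>E {..<M}) < card {..<p}" using cardPi assms(4) by simp
  then have "\<not> inj_on B {..<p}"
  proof -
    assume lt: "card (A \<rightarrow>\<^sub>E {..<M}) < card {..<p}"
    show ?thesis
    proof
      assume "inj_on B {..<p}"
      then have "card {..<p} \<le> card (A \<rightarrow>\<^sub>E {..<M})"
        by (rule card_inj_on_le) (use Bin assms(1) in \<open>auto intro: finite_PiE\<close>)
      then show False using lt by simp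
    qed
  qed
  then obtain t1 t2 where tt: "t1 < p" "t2 < p" "t1 \<noteq> t2" "B t1 = B t2"
    unfolding inj_on_def by auto
  define a1 where "a1 = min t1 t2"
  define a2 where "a2 = max t1 t2"
  have aa: "a1 < a2" "a2 < p" "B a1 = B a2" using tt unfolding a1_def a2_def by (auto simp: min_def max_def)
  show ?thesis
  proof (intro exI[of _ "a2 - a1"] conjI ballI)
    show "1 \<le> a2 - a1" "a2 - a1 < p" using aa by auto
  next
    fix c assume c: "c \<in> A"
    define r1 where "r1 = (a1 * c) mod p"
    define r2 where "r2 = (a2 * c) mod p"
    have q: "r1 * M div p = r2 * M div p"
      using fun_cong[OF aa(3), of c] c unfolding B_def r1_def r2_def by simp
    have dm: "x div p * p \<le> x \<and> x < x div p * p + p" for x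
    proof -
      have "x = x div p * p + x mod p" by simp
      moreover have "x mod p < p" using p0 by simp
      ultimately show ?thesis by linarith
    qed
    define q where "q = r1 * M div p"
    have b1: "q * p \<le> r1 * M" "r1 * M < q * p + p" using dm[of "r1 * M"] unfolding q_def by auto
    have b2: "q * p \<le> r2 * M" "r2 * M < q * p + p" using dm[of "r2 * M"] unfolding q_def q by auto
    have i1: "int q * int p \<le> int r1 * int M" "int r1 * int M < int q * int p + int p"
      using b1 by (simp_all only: of_nat_mult[symmetric] of_nat_add[symmetric] of_nat_le_iff of_nat_less_iff)
    have i2: "int q * int p \<le> int r2 * int M" "int r2 * int M < int q * int p + int p"
      using b2 by (simp_all only: of_nat_mult[symmetric] of_nat_add[symmetric] of_nat_le_iff of_nat_less_iff)
    have "\<bar>int r2 * int M - int r1 * int M\<bar> < int p" using i1 i2 by linarith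
    moreover have "int r2 * int M - int r1 * int M = (int r2 - int r1) * int M" by (simp add: left_diff_distrib)
    ultimately have "\<bar>int r2 - int r1\<bar> * int M < int p" by (simp add: abs_mult)
    then have "real_of_int (\<bar>int r2 - int r1\<bar> * int M) < real_of_int (int p)"
      by (simp only: of_int_less_iff)
    then have "real_of_int \<bar>int r2 - int r1\<bar> * real M < real p" by simp
    moreover have "[int r2 - int r1 = int (a2 - a1) * int c] (mod int p)"
    proof -
      have "[int r2 - int r1 = int a2 * int c - int a1 * int c] (mod int p)"
        unfolding r1_def r2_def by (intro cong_diff) (simp_all add: cong_def zmod_int)
      then show ?thesis using aa by (simp add: of_nat_diff left_diff_distrib)
    qed
    ultimately show "\<exists>s::int. [s = int (a2 - a1) * int c] (mod int p) \<and> real_of_int \<bar>s\<bar> * real M < real p"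
      by blast
  qed
qed

lemma enum_pad:
  fixes F :: "int set"
  assumes "finite F" "card F \<le> m"
  obtains C c where "F \<subseteq> C" "C \<subseteq> F \<union> {0..<int m}" "card C = m" "bij_betw c {1..m} C" "finite C"
proof -
  define U where "U = F \<union> {0..<int m}"
  have finU: "finite U" using assms(1) by (simp add: U_def)
  have "card {0..<int m} \<le> card U" unfolding U_def by (rule card_mono) (use assms(1) in auto)
  then have "m \<le> card U" by simp
  have "card (U - F) = card U - card F" using assms(1) finU by (simp add: U_def card_Diff_subset)
  then have "m - card F \<le> card (U - F)" using \<open>m \<le> card U\<close> by simp
  then obtain C' where C': "C' \<subseteq> U - F" "card C' = m - card F" "finite C'"
    by (metis obtain_subset_with_card_n)
  define C where "C = F \<union> C'"
  have "card C = card F + card C'" unfolding C_def using C' assms(1)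
    by (intro card_Un_disjoint) auto
  then have cC: "card C = m" using C' assms(2) by simp
  have finC: "finite C" using C' assms(1) by (simp add: C_def)
  obtain c where "bij_betw c {1..card C} C" using ex_bij_betw_nat_finite_1[OF finC] by blast
  then show ?thesis using that[of C c] C' cC finC unfolding C_def U_def by auto
qed

lemma mod_inj_small:
  fixes x y :: int
  assumes "\<bar>x\<bar> * 2 < int p" "\<bar>y\<bar> * 2 < int p" "x mod int p = y mod int p"
  shows "x = y"
proof -
  have "int p dvd (x - y)" using assms(3) by (simp add: mod_eq_dvd_iff)
  moreover have "\<bar>x - y\<bar> < int p" using assms(1,2) by linarith
  ultimately have "x - y = 0" by (rule dvd_small)
  then show ?thesis by simp
qed


lemma ee_exp: "ee p (of_int (- c) * \<alpha>) = exp (- 2 * of_real pi * \<i> * of_int c * of_real \<alpha> / of_nat p)"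
  by (simp add: ee_def cis_conv_exp field_simps)

context
  fixes N p :: nat and T :: "int set"
  assumes p0: "p > 0" and N1: "N \<ge> 1" and finT: "finite T"
    and small: "int (N - 1) * (\<Sum>s\<in>T. \<bar>s\<bar>) < int p"
begin

lemma g_repr:
  assumes L: "\<forall>\<beta>. complex_of_real (Kf N p T \<beta>) = kval p L \<beta>"
    and C: "finite C" "fst ` set L \<subseteq> uminus ` C" and c: "bij_betw c {1..m} C"
  shows "complex_of_real (gf N p T h \<alpha>) = (1 / of_nat p) * (\<Sum>i=1..m.
      exp (- 2 * of_real pi * \<i> * of_int (c i) * of_real \<alpha> / of_nat p) *
      (of_nat p * of_real (mass L (- c i) / Zf N p T) * (\<Sum>x<p. of_real (h x) * ee p (of_int (c i * int x)))))"
proof -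
  define D where "D = uminus ` C"
  have finD: "finite D" using C(1) by (simp add: D_def)
  have kv: "kval p L \<beta> = (\<Sum>\<nu>\<in>D. of_real (mass L \<nu>) * ee p (of_int \<nu> * \<beta>))" for \<beta>
    unfolding kval_def using kval_mass_sum[OF finD, of L "\<lambda>\<nu>. ee p (of_int \<nu> * \<beta>)"] C(2) D_def by simp
  define Z where "Z = Zf N p T"
  have "complex_of_real (gf N p T h \<alpha>) = (1 / of_real Z) * (\<Sum>x<p. of_real (h x) * kval p L (\<alpha> - real x))"
    unfolding gf_def Z_def using L by simp
  also have "\<dots> = (1 / of_real Z) * (\<Sum>x<p. \<Sum>\<nu>\<in>D. of_real (h x) * (of_real (mass L \<nu>) * (ee p (of_int \<nu> * \<alpha>) * ee p (of_int (- \<nu> * int x)))))"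
  proof -
    have "ee p (of_int \<nu> * (\<alpha> - real x)) = ee p (of_int \<nu> * \<alpha>) * ee p (of_int (- \<nu> * int x))" for \<nu> x
      by (simp add: ee_add[symmetric] algebra_simps)
    then show ?thesis unfolding kv by (simp add: sum_distrib_left)
  qed
  also have "\<dots> = (\<Sum>\<nu>\<in>D. ee p (of_int \<nu> * \<alpha>) * (of_real (mass L \<nu>) / of_real Z * (\<Sum>x<p. of_real (h x) * ee p (of_int (- \<nu> * int x)))))"
    by (simp add: sum_distrib_left sum.swap[of _ D "{..<p}"] mult_ac)
  also have "\<dots> = (\<Sum>c'\<in>C. ee p (of_int (- c') * \<alpha>) * (of_real (mass L (- c')) / of_real Z * (\<Sum>x<p. of_real (h x) * ee p (of_int (c' * int x)))))"
    unfolding D_def by (subst sum.reindex) (auto simp: inj_on_def)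
  also have "\<dots> = (\<Sum>i=1..m. ee p (of_int (- c i) * \<alpha>) * (of_real (mass L (- c i)) / of_real Z * (\<Sum>x<p. of_real (h x) * ee p (of_int (c i * int x)))))"
    by (rule sum.reindex_bij_betw[OF c, symmetric])
  also have "\<dots> = (1 / of_nat p) * (\<Sum>i=1..m.
      exp (- 2 * of_real pi * \<i> * of_int (c i) * of_real \<alpha> / of_nat p) *
      (of_nat p * of_real (mass L (- c i) / Z) * (\<Sum>x<p. of_real (h x) * ee p (of_int (c i * int x)))))"
    unfolding ee_exp using p0 by (simp add: sum_distrib_left)
  finally show ?thesis unfolding Z_def .
qed

end


lemma root_pow:
  fixes a :: real
  assumes "n > 0" "a \<ge> 0"
  shows "(a ^ n) powr (1 / real n) = a"
proof (cases "a = 0")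
  case True then show ?thesis using assms by simp
next
  case False
  then have "a > 0" using assms by simp
  then have "(a ^ n) powr (1 / real n) = (a powr real n) powr (1 / real n)" by (simp add: powr_realpow)
  also have "\<dots> = a powr (real n * (1 / real n))" by (simp add: powr_powr)
  also have "\<dots> = a" using assms \<open>a > 0\<close> by simp
  finally show ?thesis .
qed

lemma size_facts:
  fixes P :: real and K0 m Cc :: nat
  assumes K0: "K0 \<ge> 1" and m: "m \<ge> 2 * K0"
    and PC: "P > real ((Cc + 1) ^ (2 * K0))" and P4: "P \<ge> real (4 ^ K0)"
    and P2: "P \<ge> real (2 ^ m)" and Pm: "P > real (m ^ 2)"
  shows "P powr (1 / real K0) \<ge> 4"
    and "(P powr (1 / real K0)) ^ K0 = P"
    and "real Cc * (P / P powr (1 / real K0)) < P powr (1 - 1 / real m)"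
    and "P powr (1 - 1 / real m) * 2 \<le> P"
    and "real m < P powr (1 - 1 / real m)"
proof -
  have "real (4 ^ K0) \<ge> 4" using K0 by (simp add: self_le_power)
  then have Ppos: "P > 0" and P1: "P \<ge> 1" using P4 by auto
  have m2: "m \<ge> 2" using K0 m by simp
  show r4: "P powr (1 / real K0) \<ge> 4"
  proof -
    have "(real (4 ^ K0)) powr (1 / real K0) = 4" using root_pow[of K0 4] K0 by simp
    moreover have "(real (4 ^ K0)) powr (1 / real K0) \<le> P powr (1 / real K0)"
      using P4 by (intro powr_mono2) auto
    ultimately show ?thesis by simp
  qed
  show "(P powr (1 / real K0)) ^ K0 = P"
  proof -
    have "(P powr (1 / real K0)) ^ K0 = (P powr (1 / real K0)) powr real K0"
      using Ppos by (simp add: powr_realpow)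
    also have "\<dots> = P powr (1 / real K0 * real K0)" by (simp add: powr_powr)
    also have "\<dots> = P" using K0 Ppos by simp
    finally show ?thesis .
  qed
  show "real Cc * (P / P powr (1 / real K0)) < P powr (1 - 1 / real m)"
  proof -
    have e1: "P / P powr (1 / real K0) = P powr (1 - 1 / real K0)"
      using Ppos by (simp add: powr_diff)
    have e2: "P powr (1 - 1 / real m) = P powr (1 - 1 / real K0) * P powr (1 / real K0 - 1 / real m)"
      by (simp add: powr_add[symmetric])
    have "1 / real (2 * K0) \<le> 1 / real K0 - 1 / real m"
    proof -
      have "1 / real m \<le> 1 / real (2 * K0)" using m K0 by (intro divide_left_mono) auto
      moreover have "1 / real K0 = 2 * (1 / real (2 * K0))" by simp
      ultimately show ?thesis by linarith
    qed
    then have "P powr (1 / real (2 * K0)) \<le> P powr (1 / real K0 - 1 / real m)"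
      using P1 by (intro powr_mono) auto
    moreover have "real Cc < P powr (1 / real (2 * K0))"
    proof -
      have "real ((Cc + 1) ^ (2 * K0)) powr (1 / real (2 * K0)) = real Cc + 1"
        using root_pow[of "2 * K0" "real Cc + 1"] K0 by (simp add: add.commute)
      moreover have "real ((Cc + 1) ^ (2 * K0)) powr (1 / real (2 * K0)) < P powr (1 / real (2 * K0))"
        using PC K0 by (intro powr_less_mono2) auto
      ultimately show ?thesis by simp
    qed
    ultimately have "real Cc < P powr (1 / real K0 - 1 / real m)" by simp
    moreover have "P powr (1 - 1 / real K0) > 0" using Ppos by simp
    ultimately show ?thesis unfolding e1 e2 by simp
  qed
  show "P powr (1 - 1 / real m) * 2 \<le> P"
  proof -
    have "(real (2 ^ m)) powr (1 / real m) = 2" using root_pow[of m 2] m2 by simp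
    moreover have "(real (2 ^ m)) powr (1 / real m) \<le> P powr (1 / real m)"
      using P2 by (intro powr_mono2) auto
    ultimately have "2 \<le> P powr (1 / real m)" by simp
    have "P powr (1 - 1 / real m) = P / P powr (1 / real m)" using Ppos by (simp add: powr_diff)
    moreover have "P / P powr (1 / real m) \<le> P / 2"
      using \<open>2 \<le> P powr (1 / real m)\<close> Ppos by (intro divide_left_mono) auto
    ultimately show ?thesis by simp
  qed
  show "real m < P powr (1 - 1 / real m)"
  proof -
    have "1 / real m \<le> 1 / 2" using m2 by (simp add: field_simps)
    then have "P powr (1 / 2) \<le> P powr (1 - 1 / real m)" using P1 by (intro powr_mono) auto
    moreover have "P powr (1 / 2) = sqrt P" using Ppos by (simp add: powr_half_sqrt)
    moreover have "real m < sqrt P"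
    proof -
      have "(real m)^2 < P" using Pm by simp
      then show ?thesis by (rule real_less_rsqrt)
    qed
    ultimately show ?thesis by simp
  qed
qed


lemma main_p:
  fixes \<epsilon> :: real and N K0 m p :: nat and f :: "nat \<Rightarrow> real"
  assumes eps: "\<epsilon> > 0" and N4: "N \<ge> 4" and Neps: "12 / real N \<le> \<epsilon>"
    and K0: "K0 \<ge> 1" and K0e: "2 / \<epsilon>^2 < real K0"
    and m_def: "m = N ^ (2 * K0) + 2 * K0"
    and pr: "prime p"
    and pC: "(4 * N * K0 + 1) ^ (2 * K0) < p" and p4: "4 ^ K0 \<le> p" and p2m: "2 ^ m \<le> p"
    and pm: "m ^ 2 < p" and p3: "p > 2"
    and f01: "\<forall>n<p. 0 \<le> f n \<and> f n \<le> 1"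
  shows "\<exists>(c :: nat \<Rightarrow> int) (\<gamma> :: nat \<Rightarrow> complex) (g :: real \<Rightarrow> real).
         inj_on (\<lambda>i. c i mod int p) {1..m} \<and>
         (\<forall>i\<in>{1..m}. real_of_int \<bar>c i\<bar> < real p powr (1 - 1 / real m)) \<and>
         (\<forall>\<alpha>::real. complex_of_real (g \<alpha>) =
            (1 / of_nat p) * (\<Sum>i=1..m. exp (- 2 * of_real pi * \<i> * of_int (c i) * of_real \<alpha> / of_nat p) * \<gamma> i)) \<and>
         zp_mean p (\<lambda>n. g (real n)) = zp_mean p f \<and>
         (\<forall>\<alpha>::real. -2 * \<epsilon> \<le> g \<alpha> \<and> g \<alpha> \<le> 1 + 2 * \<epsilon>) \<and>
         \<bar>zp_Lambda3 p (\<lambda>n. g (real n)) - zp_Lambda3 p f\<bar> < 25 * \<epsilon>"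
proof -
  have p0: "p > 0" using p3 by simp
  have N1: "N \<ge> 1" using N4 by simp
  define P where "P = real p"
  define S where "S = {b. b < p \<and> \<epsilon> \<le> cmod (FC p f (int b))}"
  define S2 where "S2 = {b. b < p \<and> nat ((- 2 * int b) mod int p) \<in> S}"
  define Tf where "Tf = S \<union> S2"
  have finS: "finite S" unfolding S_def by simp
  have finTf: "finite Tf" unfolding Tf_def S_def S2_def by simp
  have cardS: "real (card S) * \<epsilon>^2 \<le> 1" unfolding S_def by (rule spec_card[OF p0 f01 eps])
  have cardS2: "card S2 \<le> card S"
  proof (rule card_inj_on_le[OF _ _ finS])
    show "inj_on (\<lambda>b. nat ((- 2 * int b) mod int p)) S2"
    proof (rule inj_onI)
      fix x y assume xy: "x \<in> S2" "y \<in> S2" "nat ((- 2 * int x) mod int p) = nat ((- 2 * int y) mod int p)"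
      then have "(- 2 * int x) mod int p = (- 2 * int y) mod int p"
        using p0 by (metis nat_eq_iff2 pos_mod_sign of_nat_0_less_iff)
      then have "[- 2 * int x = - 2 * int y] (mod int p)" by (simp add: cong_def)
      then have c2: "[2 * int x = 2 * int y] (mod int p)"
        by (metis cong_minus_minus_iff mult_minus_left)
      have "coprime (int p) 2"
      proof (rule prime_imp_coprime)
        show "prime (int p)" using pr by simp
        show "\<not> int p dvd 2" using p3 by (auto dest: zdvd_imp_le)
      qed
      then have "coprime 2 (int p)" by (simp add: coprime_commute)
      then have "[int x = int y] (mod int p)" using c2 cong_mult_lcancel by blast
      then have "[x = y] (mod p)" by (simp add: cong_int_iff)
      then show "x = y" using xy cong_less_modulus_unique_nat[of x y p] unfolding S2_def by auto
    qed
    show "(\<lambda>b. nat ((- 2 * int b) mod int p)) ` S2 \<subseteq> S" unfolding S2_def by auto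
  qed
  have cardTf: "card Tf \<le> K0"
  proof -
    have "card Tf \<le> card S + card S2" unfolding Tf_def by (rule card_Un_le)
    also have "\<dots> \<le> 2 * card S" using cardS2 by simp
    finally have "real (card Tf) \<le> 2 * real (card S)" by linarith
    also have "\<dots> \<le> 2 / \<epsilon>^2" using cardS eps by (simp add: field_simps)
    also have "\<dots> < real K0" by (rule K0e)
    finally show ?thesis by simp
  qed
  define C1 where "C1 = 4 * N * K0"
  have m2K: "m \<ge> 2 * K0" using m_def by simp
  have sf: "P powr (1 / real K0) \<ge> 4" "(P powr (1 / real K0)) ^ K0 = P"
    "real C1 * (P / P powr (1 / real K0)) < P powr (1 - 1 / real m)"
    "P powr (1 - 1 / real m) * 2 \<le> P" "real m < P powr (1 - 1 / real m)"
    using size_facts[OF K0 m2K, where P=P and Cc=C1] pC p4 p2m pm unfolding P_def C1_def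
    by (simp_all only: of_nat_less_iff of_nat_le_iff)
  define r where "r = P powr (1 / real K0)"
  define Q where "Q = P powr (1 - 1 / real m)"
  have Ppos: "P > 0" unfolding P_def using p0 by simp
  define M where "M = nat \<lfloor>r / 2\<rfloor>"
  have r4: "r \<ge> 4" using sf(1) unfolding r_def .
  have fl0: "\<lfloor>r / 2\<rfloor> \<ge> 0" using r4 by simp
  have Mr: "real M = real_of_int \<lfloor>r / 2\<rfloor>" unfolding M_def using fl0 by simp
  have Mle: "real M \<le> r / 2" unfolding Mr by (rule of_int_floor_le)
  have Mge: "real M \<ge> r / 4"
  proof -
    have "real_of_int \<lfloor>r / 2\<rfloor> > r / 2 - 1" by linarith
    moreover have "r / 2 - 1 \<ge> r / 4" using r4 by simp
    ultimately show ?thesis unfolding Mr by linarith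
  qed
  have M1: "M \<ge> 1" using Mge r4 by simp
  have MK: "M ^ K0 < p"
  proof -
    have "real M ^ K0 \<le> (r / 2) ^ K0" using Mle by (intro power_mono) auto
    also have "\<dots> = P / 2 ^ K0" using sf(2) r_def by (simp add: power_divide)
    also have "\<dots> < P" using Ppos K0 by (simp add: field_simps one_less_power)
    finally have "real M ^ K0 < real p" unfolding P_def .
    then show ?thesis by (simp only: of_nat_power[symmetric] of_nat_less_iff)
  qed
  obtain t where t: "1 \<le> t" "t < p"
    "\<forall>c\<in>Tf. \<exists>s::int. [s = int t * int c] (mod int p) \<and> real_of_int \<bar>s\<bar> * real M < real p"
    using dirichlet[OF finTf cardTf M1 MK] by blast
  define sfn where "sfn c = (SOME s::int. [s = int t * int c] (mod int p) \<and> real_of_int \<bar>s\<bar> * real M < real p)" for c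
  have sfn: "[sfn c = int t * int c] (mod int p) \<and> real_of_int \<bar>sfn c\<bar> * real M < real p" if "c \<in> Tf" for c
  proof -
    have "\<exists>s::int. [s = int t * int c] (mod int p) \<and> real_of_int \<bar>s\<bar> * real M < real p"
      using t(3) that by blast
    then show ?thesis unfolding sfn_def by (rule someI_ex)
  qed
  define T' where "T' = sfn ` Tf"
  have finT': "finite T'" unfolding T'_def using finTf by simp
  have cardT': "card T' \<le> K0" unfolding T'_def using card_image_le[OF finTf, of sfn] cardTf by simp
  have sumT': "real_of_int (\<Sum>s\<in>T'. \<bar>s\<bar>) \<le> real K0 * (P / real M)"
  proof -
    have "(\<Sum>s\<in>T'. \<bar>s\<bar>) \<le> (\<Sum>c\<in>Tf. \<bar>sfn c\<bar>)" unfolding T'_def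
      using sum_image_le[OF finTf, of "\<lambda>s. \<bar>s\<bar>" sfn] by (simp add: o_def)
    then have "real_of_int (\<Sum>s\<in>T'. \<bar>s\<bar>) \<le> real_of_int (\<Sum>c\<in>Tf. \<bar>sfn c\<bar>)" by (simp only: of_int_le_iff)
    also have "\<dots> = (\<Sum>c\<in>Tf. real_of_int \<bar>sfn c\<bar>)" by (rule of_int_sum)
    also have "\<dots> \<le> (\<Sum>c\<in>Tf. P / real M)"
    proof (rule sum_mono)
      fix c assume "c \<in> Tf"
      then have "real_of_int \<bar>sfn c\<bar> * real M < P" using sfn unfolding P_def by blast
      then show "real_of_int \<bar>sfn c\<bar> \<le> P / real M" using M1 by (simp add: field_simps)
    qed
    also have "\<dots> = real (card Tf) * (P / real M)" by simp
    also have "\<dots> \<le> real K0 * (P / real M)" using cardTf Ppos by (intro mult_right_mono) auto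
    finally show ?thesis .
  qed
  define Bd where "Bd = real (N - 1) * real_of_int (\<Sum>s\<in>T'. \<bar>s\<bar>)"
  have BdQ: "Bd < Q"
  proof -
    have "Bd \<le> real N * (real K0 * (P / real M))" unfolding Bd_def
      using sumT' by (intro mult_mono) (auto intro: sum_nonneg)
    also have "\<dots> \<le> real N * (real K0 * (4 * (P / r)))"
    proof -
      have "P / real M \<le> P / (r / 4)" using Mge Ppos sf(1) r_def by (intro divide_left_mono) auto
      also have "P / (r / 4) = 4 * (P / r)" by simp
      finally show ?thesis by (intro mult_left_mono) auto
    qed
    also have "\<dots> = real C1 * (P / r)" unfolding C1_def by simp
    also have "\<dots> < Q" using sf(3) unfolding r_def Q_def .
    finally show ?thesis .
  qed
  have Q2: "Q * 2 \<le> P" using sf(4) unfolding Q_def .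
  have mQ: "real m < Q" using sf(5) unfolding Q_def .
  have small: "int (N - 1) * (\<Sum>s\<in>T'. \<bar>s\<bar>) < int p"
  proof -
    have "Bd < P" using BdQ Q2 Ppos by linarith
    then show ?thesis unfolding Bd_def P_def by (metis of_int_less_iff of_int_mult of_int_of_nat_eq)
  qed
  have cop: "coprime t p"
  proof -
    have "\<not> p dvd t" using t by (auto dest: dvd_imp_le)
    then have "coprime p t" by (rule prime_imp_coprime[OF pr])
    then show ?thesis using coprime_commute by blast
  qed
  obtain u where tu: "[t * u = 1] (mod p)" using cong_solve_coprime_nat[OF cop] by auto
  define h where "h x = f ((t * x) mod p)" for x
  have h01: "\<forall>n<p. 0 \<le> h n \<and> h n \<le> 1" unfolding h_def using f01 p0 by simp
  have spec: "\<forall>a<p. \<epsilon> \<le> cmod (FC p h (- 2 * int a)) \<longrightarrow>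
        (\<exists>s\<in>T'. [int a = s] (mod int p)) \<and> (\<exists>s\<in>T'. [- 2 * int a = s] (mod int p))"
  proof (intro allI impI)
    fix a assume a: "a < p" and big: "\<epsilon> \<le> cmod (FC p h (- 2 * int a))"
    have tu': "[int t * int u = 1] (mod int p)" using tu by (simp add: cong_int_iff[symmetric])
    define b where "b = nat ((int a * int u) mod int p)"
    have hb: "[int b = int a * int u] (mod int p)" unfolding b_def using p0 by (simp add: cong_def)
    have bp: "b < p" unfolding b_def using p0 by (simp add: nat_less_iff)
    define b' where "b' = nat ((- 2 * int b) mod int p)"
    have hb': "[int b' = - 2 * int b] (mod int p)" unfolding b'_def using p0 by (simp add: cong_def)
    have "FC p h (- 2 * int a) = FC p f (- 2 * int a * int u)"
      unfolding h_def by (rule dil_FC[OF p0 cop tu])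
    also have "\<dots> = FC p f (int b')"
    proof (rule FC_cong[OF p0])
      have "[- 2 * int a * int u = - 2 * (int a * int u)] (mod int p)" by (simp add: mult.assoc)
      also have "[- 2 * (int a * int u) = - 2 * int b] (mod int p)" by (rule cong_mult[OF cong_refl cong_sym[OF hb]])
      also have "[- 2 * int b = int b'] (mod int p)" by (rule cong_sym[OF hb'])
      finally show "[- 2 * int a * int u = int b'] (mod int p)" .
    qed
    finally have "\<epsilon> \<le> cmod (FC p f (int b'))" using big by simp
    moreover have "b' < p" unfolding b'_def using p0 by (simp add: nat_less_iff)
    ultimately have b'S: "b' \<in> S" unfolding S_def by simp
    then have bT: "b \<in> Tf" unfolding Tf_def S2_def b'_def using bp by simp
    have b'T: "b' \<in> Tf" using b'S unfolding Tf_def by simp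
    have s1: "[sfn b = int a] (mod int p)"
    proof -
      have "[sfn b = int t * int b] (mod int p)" using sfn[OF bT] by simp
      also have "[int t * int b = int t * (int a * int u)] (mod int p)" by (rule cong_mult[OF cong_refl hb])
      also have "[int t * (int a * int u) = int a * (int t * int u)] (mod int p)" by (simp add: mult_ac)
      also have "[int a * (int t * int u) = int a * 1] (mod int p)" by (rule cong_mult[OF cong_refl tu'])
      finally show ?thesis by simp
    qed
    have s2: "[sfn b' = - 2 * int a] (mod int p)"
    proof -
      have "[sfn b' = int t * int b'] (mod int p)" using sfn[OF b'T] by simp
      also have "[int t * int b' = int t * (- 2 * int b)] (mod int p)" by (rule cong_mult[OF cong_refl hb'])
      also have "[int t * (- 2 * int b) = - 2 * (int t * int b)] (mod int p)" by (simp add: mult_ac)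
      also have "[- 2 * (int t * int b) = - 2 * int a] (mod int p)"
      proof (rule cong_mult[OF cong_refl])
        have "[int t * int b = int t * (int a * int u)] (mod int p)" by (rule cong_mult[OF cong_refl hb])
        also have "[int t * (int a * int u) = int a * (int t * int u)] (mod int p)" by (simp add: mult_ac)
        also have "[int a * (int t * int u) = int a * 1] (mod int p)" by (rule cong_mult[OF cong_refl tu'])
        finally show "[int t * int b = int a] (mod int p)" by simp
      qed
      finally show ?thesis .
    qed
    show "(\<exists>s\<in>T'. [int a = s] (mod int p)) \<and> (\<exists>s\<in>T'. [- 2 * int a = s] (mod int p))"
      using s1 s2 bT b'T unfolding T'_def by (auto intro: cong_sym)
  qed
  define g where "g = gf N p T' h"
  obtain L where L: "\<forall>\<beta>. complex_of_real (Kf N p T' \<beta>) = kval p L \<beta>"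
    "\<forall>q\<in>set L. snd q \<ge> 0 \<and> \<bar>fst q\<bar> < int p" "length L \<le> N ^ (2 * card T')"
    "\<forall>q\<in>set L. \<bar>fst q\<bar> \<le> int (N - 1) * (\<Sum>s\<in>T'. \<bar>s\<bar>)"
    by (rule rep[OF p0 N1 finT' small])
  define Fr where "Fr = uminus ` fst ` set L"
  have cardFr: "card Fr \<le> m"
  proof -
    have "card Fr \<le> card (fst ` set L)" unfolding Fr_def by (rule card_image_le) simp
    also have "\<dots> \<le> card (set L)" by (rule card_image_le) simp
    also have "\<dots> \<le> length L" by (rule card_length)
    also have "\<dots> \<le> N ^ (2 * card T')" by (rule L(3))
    also have "\<dots> \<le> N ^ (2 * K0)" using cardT' N1 by (intro power_increasing) auto
    also have "\<dots> \<le> m" unfolding m_def by simp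
    finally show ?thesis .
  qed
  obtain C c where C: "Fr \<subseteq> C" "C \<subseteq> Fr \<union> {0..<int m}" "card C = m" "bij_betw c {1..m} C" "finite C"
    using enum_pad[of Fr m] cardFr unfolding Fr_def by auto
  have Csub: "fst ` set L \<subseteq> uminus ` C"
  proof
    fix x assume "x \<in> fst ` set L"
    then have "- x \<in> C" using C(1) unfolding Fr_def by auto
    then show "x \<in> uminus ` C" by (metis image_eqI minus_minus)
  qed
  have cbound: "real_of_int \<bar>x\<bar> < Q" if "x \<in> C" for x
  proof -
    have "x \<in> Fr \<or> x \<in> {0..<int m}" using C(2) that by auto
    then show ?thesis
    proof
      assume "x \<in> Fr"
      then obtain q where q: "q \<in> set L" "x = - fst q" unfolding Fr_def by auto
      then have "\<bar>x\<bar> \<le> int (N - 1) * (\<Sum>s\<in>T'. \<bar>s\<bar>)" using L(4) by simp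
      then have "real_of_int \<bar>x\<bar> \<le> Bd" unfolding Bd_def
        by (metis of_int_le_iff of_int_mult of_int_of_nat_eq)
      then show ?thesis using BdQ by simp
    next
      assume "x \<in> {0..<int m}"
      then have "real_of_int \<bar>x\<bar> < real m" by simp
      then show ?thesis using mQ by simp
    qed
  qed
  have cmap: "c i \<in> C" if "i \<in> {1..m}" for i using C(4) that by (auto simp: bij_betw_def)
  have inj: "inj_on (\<lambda>i. c i mod int p) {1..m}"
  proof (rule inj_onI)
    fix i j assume ij: "i \<in> {1..m}" "j \<in> {1..m}" "c i mod int p = c j mod int p"
    have "real_of_int \<bar>c i\<bar> * 2 < P" "real_of_int \<bar>c j\<bar> * 2 < P"
      using cbound[OF cmap[OF ij(1)]] cbound[OF cmap[OF ij(2)]] Q2 by linarith+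
    then have "\<bar>c i\<bar> * 2 < int p" "\<bar>c j\<bar> * 2 < int p" unfolding P_def
      by (metis of_int_less_iff of_int_mult of_int_of_nat_eq of_int_numeral)+
    then have "c i = c j" using mod_inj_small ij(3) by blast
    then show "i = j" using C(4) ij unfolding bij_betw_def inj_on_def by blast
  qed
  define \<gamma> where "\<gamma> i = of_nat p * of_real (mass L (- c i) / Zf N p T') * (\<Sum>x<p. of_real (h x) * ee p (of_int (c i * int x)))" for i
  show ?thesis
  proof (intro exI[of _ c] exI[of _ \<gamma>] exI[of _ g] conjI)
    show "inj_on (\<lambda>i. c i mod int p) {1..m}" by (rule inj)
    show "\<forall>i\<in>{1..m}. real_of_int \<bar>c i\<bar> < real p powr (1 - 1 / real m)"
      using cbound cmap unfolding Q_def P_def by blast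
    show "\<forall>\<alpha>. complex_of_real (g \<alpha>) =
        (1 / of_nat p) * (\<Sum>i=1..m. exp (- 2 * of_real pi * \<i> * of_int (c i) * of_real \<alpha> / of_nat p) * \<gamma> i)"
      unfolding g_def \<gamma>_def using g_repr[OF p0 N1 finT' small L(1) C(5) Csub C(4)] by blast
    show "zp_mean p (\<lambda>n. g (real n)) = zp_mean p f"
    proof -
      have "zp_mean p (\<lambda>n. g (real n)) = zp_mean p h"
        unfolding zp_mean_def g_def using g_sum[OF p0 N1 finT' small] by simp
      also have "\<dots> = zp_mean p f" unfolding h_def by (rule dil_mean[OF p0 cop])
      finally show ?thesis .
    qed
    show "\<forall>\<alpha>. - 2 * \<epsilon> \<le> g \<alpha> \<and> g \<alpha> \<le> 1 + 2 * \<epsilon>"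
      using g_bounds[OF p0 N1 finT' small h01] eps unfolding g_def by (smt (verit))
    show "\<bar>zp_Lambda3 p (\<lambda>n. g (real n)) - zp_Lambda3 p f\<bar> < 25 * \<epsilon>"
    proof -
      have "zp_Lambda3 p f = zp_Lambda3 p h" unfolding h_def by (rule dil_Lambda3[OF p0 cop, symmetric])
      moreover have "\<bar>zp_Lambda3 p (\<lambda>n. g (real n)) - zp_Lambda3 p h\<bar> \<le> 2 * \<epsilon> + 12 / real N"
        unfolding g_def by (rule Lambda3_close[OF p0 N1 finT' small h01 eps N4 spec])
      ultimately show ?thesis using Neps eps by simp
    qed
  qed
qed


theorem proposition1:
  fixes \<epsilon> :: real
  assumes "\<epsilon> > 0"
  shows "\<exists>m0 p0 :: nat. \<forall>p :: nat. prime p \<and> p > p0 \<longrightarrow>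
    (\<forall>f :: nat \<Rightarrow> real. (\<forall>n<p. 0 \<le> f n \<and> f n \<le> 1) \<longrightarrow>
      (\<exists>(m :: nat) (c :: nat \<Rightarrow> int) (\<gamma> :: nat \<Rightarrow> complex) (g :: real \<Rightarrow> real).
         1 \<le> m \<and> m < m0 \<and>
         inj_on (\<lambda>i. c i mod int p) {1..m} \<and>
         (\<forall>i\<in>{1..m}. real_of_int \<bar>c i\<bar> < real p powr (1 - 1 / real m)) \<and>
         (\<forall>\<alpha>::real. complex_of_real (g \<alpha>) =
            (1 / of_nat p) * (\<Sum>i=1..m. exp (- 2 * of_real pi * \<i> * of_int (c i) * of_real \<alpha> / of_nat p) * \<gamma> i)) \<and>
         zp_mean p (\<lambda>n. g (real n)) = zp_mean p f \<and>
         (\<forall>\<alpha>::real. -2 * \<epsilon> \<le> g \<alpha> \<and> g \<alpha> \<le> 1 + 2 * \<epsilon>) \<and>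
         \<bar>zp_Lambda3 p (\<lambda>n. g (real n)) - zp_Lambda3 p f\<bar> < 25 * \<epsilon>))"
proof -
  define N :: nat where "N = nat \<lceil>12 / \<epsilon>\<rceil> + 4"
  define K0 :: nat where "K0 = nat \<lfloor>2 / \<epsilon>^2\<rfloor> + 1"
  define m :: nat where "m = N ^ (2 * K0) + 2 * K0"
  define p0 :: nat where "p0 = (4 * N * K0 + 1) ^ (2 * K0) + 4 ^ K0 + 2 ^ m + m ^ 2 + 3"
  have N4: "N \<ge> 4" unfolding N_def by simp
  have Neps: "12 / real N \<le> \<epsilon>"
  proof -
    have "real N \<ge> 12 / \<epsilon>" unfolding N_def by linarith
    then have "real N * \<epsilon> \<ge> 12" using assms by (simp add: field_simps)
    then show ?thesis using N4 by (simp add: field_simps)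
  qed
  have K0: "K0 \<ge> 1" unfolding K0_def by simp
  have K0e: "2 / \<epsilon>^2 < real K0" unfolding K0_def by linarith
  have m1: "1 \<le> m" using K0 unfolding m_def by simp
  show ?thesis
  proof (rule exI[of _ "m + 1"], rule exI[of _ p0], intro allI impI)
    fix p :: nat and f :: "nat \<Rightarrow> real"
    assume pp: "prime p \<and> p0 < p" and f01: "\<forall>n<p. 0 \<le> f n \<and> f n \<le> 1"
    have pC: "(4 * N * K0 + 1) ^ (2 * K0) < p" and p4: "4 ^ K0 \<le> p" and p2m: "2 ^ m \<le> p"
      and pm: "m ^ 2 < p" and p3: "p > 2" using pp unfolding p0_def by auto
    obtain c \<gamma> g where H: "inj_on (\<lambda>i. c i mod int p) {1..m} \<and>
         (\<forall>i\<in>{1..m}. real_of_int \<bar>c i\<bar> < real p powr (1 - 1 / real m)) \<and>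
         (\<forall>\<alpha>::real. complex_of_real (g \<alpha>) =
            (1 / of_nat p) * (\<Sum>i=1..m. exp (- 2 * of_real pi * \<i> * of_int (c i) * of_real \<alpha> / of_nat p) * \<gamma> i)) \<and>
         zp_mean p (\<lambda>n. g (real n)) = zp_mean p f \<and>
         (\<forall>\<alpha>::real. -2 * \<epsilon> \<le> g \<alpha> \<and> g \<alpha> \<le> 1 + 2 * \<epsilon>) \<and>
         \<bar>zp_Lambda3 p (\<lambda>n. g (real n)) - zp_Lambda3 p f\<bar> < 25 * \<epsilon>"
      using main_p[OF assms N4 Neps K0 K0e m_def _ pC p4 p2m pm p3 f01] pp by blast
    show "\<exists>(m' :: nat) (c :: nat \<Rightarrow> int) (\<gamma> :: nat \<Rightarrow> complex) (g :: real \<Rightarrow> real).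
         1 \<le> m' \<and> m' < m + 1 \<and>
         inj_on (\<lambda>i. c i mod int p) {1..m'} \<and>
         (\<forall>i\<in>{1..m'}. real_of_int \<bar>c i\<bar> < real p powr (1 - 1 / real m')) \<and>
         (\<forall>\<alpha>::real. complex_of_real (g \<alpha>) =
            (1 / of_nat p) * (\<Sum>i=1..m'. exp (- 2 * of_real pi * \<i> * of_int (c i) * of_real \<alpha> / of_nat p) * \<gamma> i)) \<and>
         zp_mean p (\<lambda>n. g (real n)) = zp_mean p f \<and>
         (\<forall>\<alpha>::real. -2 * \<epsilon> \<le> g \<alpha> \<and> g \<alpha> \<le> 1 + 2 * \<epsilon>) \<and>
         \<bar>zp_Lambda3 p (\<lambda>n. g (real n)) - zp_Lambda3 p f\<bar> < 25 * \<epsilon>"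
    proof (rule exI[of _ m], rule exI[of _ c], rule exI[of _ \<gamma>], rule exI[of _ g])
      show "1 \<le> m \<and> m < m + 1 \<and>
         inj_on (\<lambda>i. c i mod int p) {1..m} \<and>
         (\<forall>i\<in>{1..m}. real_of_int \<bar>c i\<bar> < real p powr (1 - 1 / real m)) \<and>
         (\<forall>\<alpha>::real. complex_of_real (g \<alpha>) =
            (1 / of_nat p) * (\<Sum>i=1..m. exp (- 2 * of_real pi * \<i> * of_int (c i) * of_real \<alpha> / of_nat p) * \<gamma> i)) \<and>
         zp_mean p (\<lambda>n. g (real n)) = zp_mean p f \<and>
         (\<forall>\<alpha>::real. -2 * \<epsilon> \<le> g \<alpha> \<and> g \<alpha> \<le> 1 + 2 * \<epsilon>) \<and>
         \<bar>zp_Lambda3 p (\<lambda>n. g (real n)) - zp_Lambda3 p f\<bar> < 25 * \<epsilon>"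
        using H m1 by (intro conjI) simp_all
    qed
  qed
qed


end
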